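(* Let $(M,g)$ be an $n$-dimensional Riemannian manifold and suppose that either (1) $n=3$ and $(M,g)$ has nonnegative sectional curvature, or (2) $n\ge4$ and $(M,g)$ has $2$-nonnegative curvature operator. Then $R^2-2|\operatorname{Ric}|^2\ge0$ everywhere on $M$.
   Context: The curvature operator $\mathcal{R}$ is the symmetric endomorphism of $\Lambda^2T_mM$ (with the inner product induced by $g$) normalized so that $\langle e_j\wedge e_k,\mathcal{R}(e_j\wedge e_k)\rangle$ is the sectional curvature of the plane spanned by orthonormal $e_j,e_k$. $(M,g)$ has $2$-nonnegative curvature operator if at every point the sum of the two smallest eigenvalues of $\mathcal{R}$ is nonnegative. $R$ is scalar curvature and $|\operatorname{Ric}|$ the norm of the Ricci tensor. *)

theory Defs
  imports "Jordan_Normal_Form.Char_Poly" "HOL-Computational_Algebra.Polynomial"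
begin

text \<open>Pointwise (algebraic) model.  At a point m of an n-dimensional Riemannian
manifold, fix an orthonormal basis e_0,...,e_(n-1) of T_mM.  The Riemann
tensor is given by components  Rm i j k l = <e_i \<and> e_j, R(e_k \<and> e_l)>,
so that Rm i j i j is the sectional curvature of span(e_i,e_j).\<close>

definition alg_curv_tensor :: "nat \<Rightarrow> (nat \<Rightarrow> nat \<Rightarrow> nat \<Rightarrow> nat \<Rightarrow> real) \<Rightarrow> bool" where
  "alg_curv_tensor n Rm \<longleftrightarrow>
     (\<forall>i<n. \<forall>j<n. \<forall>k<n. \<forall>l<n.
        Rm i j k l = - Rm j i k l \<and>
        Rm i j k l = Rm k l i j \<and>
        Rm i j k l + Rm j k i l + Rm k i j l = 0)"

definition curv4 :: "nat \<Rightarrow> (nat \<Rightarrow> nat \<Rightarrow> nat \<Rightarrow> nat \<Rightarrow> real)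
     \<Rightarrow> (nat \<Rightarrow> real) \<Rightarrow> (nat \<Rightarrow> real) \<Rightarrow> (nat \<Rightarrow> real) \<Rightarrow> (nat \<Rightarrow> real) \<Rightarrow> real" where
  "curv4 n Rm x y z w =
     (\<Sum>i<n. \<Sum>j<n. \<Sum>k<n. \<Sum>l<n. Rm i j k l * x i * y j * z k * w l)"

definition ip :: "nat \<Rightarrow> (nat \<Rightarrow> real) \<Rightarrow> (nat \<Rightarrow> real) \<Rightarrow> real" where
  "ip n x y = (\<Sum>i<n. x i * y i)"

definition nonneg_sectional :: "nat \<Rightarrow> (nat \<Rightarrow> nat \<Rightarrow> nat \<Rightarrow> nat \<Rightarrow> real) \<Rightarrow> bool" where
  "nonneg_sectional n Rm \<longleftrightarrow>
     (\<forall>u v. ip n u u = 1 \<and> ip n v v = 1 \<and> ip n u v = 0 \<longrightarrow> curv4 n Rm u v u v \<ge> 0)"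

text \<open>Orthonormal basis e_i \<and> e_j (i<j) of \<Lambda>^2, listed.\<close>
definition wedge_pairs :: "nat \<Rightarrow> (nat \<times> nat) list" where
  "wedge_pairs n = [(i, j). i \<leftarrow> [0..<n], j \<leftarrow> [Suc i..<n]]"

definition curv_op_mat :: "nat \<Rightarrow> (nat \<Rightarrow> nat \<Rightarrow> nat \<Rightarrow> nat \<Rightarrow> real) \<Rightarrow> real mat" where
  "curv_op_mat n Rm =
     (let ps = wedge_pairs n; N = length ps in
      mat N N (\<lambda>(a, b). Rm (fst (ps ! a)) (snd (ps ! a)) (fst (ps ! b)) (snd (ps ! b))))"

text \<open>Eigenvalues of the curvature operator with multiplicity, in increasing order
(the characteristic polynomial of a real symmetric matrix splits over the reals).\<close>
definition curv_op_eigenvalues :: "nat \<Rightarrow> (nat \<Rightarrow> nat \<Rightarrow> nat \<Rightarrow> nat \<Rightarrow> real) \<Rightarrow> real list" where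
  "curv_op_eigenvalues n Rm = sorted_list_of_multiset (proots (char_poly (curv_op_mat n Rm)))"

definition two_nonneg_curv_op :: "nat \<Rightarrow> (nat \<Rightarrow> nat \<Rightarrow> nat \<Rightarrow> nat \<Rightarrow> real) \<Rightarrow> bool" where
  "two_nonneg_curv_op n Rm \<longleftrightarrow>
     (let ev = curv_op_eigenvalues n Rm in ev ! 0 + ev ! 1 \<ge> 0)"

definition ricci :: "nat \<Rightarrow> (nat \<Rightarrow> nat \<Rightarrow> nat \<Rightarrow> nat \<Rightarrow> real) \<Rightarrow> nat \<Rightarrow> nat \<Rightarrow> real" where
  "ricci n Rm j k = (\<Sum>i<n. Rm i j i k)"

definition scal :: "nat \<Rightarrow> (nat \<Rightarrow> nat \<Rightarrow> nat \<Rightarrow> nat \<Rightarrow> real) \<Rightarrow> real" where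
  "scal n Rm = (\<Sum>j<n. ricci n Rm j j)"

definition ricci_norm_sq :: "nat \<Rightarrow> (nat \<Rightarrow> nat \<Rightarrow> nat \<Rightarrow> nat \<Rightarrow> real) \<Rightarrow> real" where
  "ricci_norm_sq n Rm = (\<Sum>j<n. \<Sum>k<n. (ricci n Rm j k)\<^sup>2)"

end

theory Submission
  imports Defs "HOL-Analysis.Analysis"
begin

lemma cont_coord: "continuous_on S (\<lambda>x::nat\<Rightarrow>real. x i)"
  by (rule continuous_on_subset[OF continuous_on_product_coordinates]) simp

lemma cont_qf: "continuous_on S (\<lambda>x::nat\<Rightarrow>real. \<Sum>i<N. \<Sum>j<N. B i j * x i * x j)"
  by (intro continuous_on_sum continuous_on_mult continuous_on_const cont_coord)

definition sph :: "nat \<Rightarrow> (nat \<Rightarrow> real) set" where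
  "sph N = {x. (\<forall>i\<ge>N. x i = 0) \<and> (\<Sum>i<N. x i * x i) = 1}"

lemma compact_sph: "compact (sph N)"
proof -
  define K where "K = PiE UNIV (\<lambda>i::nat. if i < N then {-1..1::real} else {0})"
  have "compactin (product_topology (\<lambda>i. euclidean) UNIV) K"
    unfolding K_def by (subst compactin_PiE) (auto simp: compactin_euclidean_iff)
  hence cK: "compact K" by (simp add: euclidean_product_topology compactin_euclidean_iff)
  have cl: "closed {x::nat\<Rightarrow>real. (\<Sum>i<N. x i * x i) = 1}"
    by (intro closed_Collect_eq continuous_on_sum continuous_on_mult continuous_on_const cont_coord)
  have "sph N = K \<inter> {x. (\<Sum>i<N. x i * x i) = 1}"
  proof (intro Set.set_eqI iffI)
    fix x :: "nat\<Rightarrow>real" assume x: "x \<in> sph N"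
    have "x i \<in> (if i < N then {-1..1} else {0})" for i
    proof (cases "i < N")
      case True
      have "x i * x i \<le> (\<Sum>i<N. x i * x i)"
        by (rule member_le_sum) (use True in auto)
      hence "x i ^ 2 \<le> 1" using x by (simp add: sph_def power2_eq_square)
      hence "\<bar>x i\<bar> \<le> 1" using abs_le_square_iff[of "x i" 1] by simp
      then show ?thesis using True by auto
    qed (use x in \<open>auto simp: sph_def\<close>)
    then show "x \<in> K \<inter> {x. (\<Sum>i<N. x i * x i) = 1}" using x by (auto simp: K_def sph_def)
  next
    fix x :: "nat\<Rightarrow>real" assume "x \<in> K \<inter> {x. (\<Sum>i<N. x i * x i) = 1}"
    then show "x \<in> sph N" unfolding K_def sph_def PiE_iff by (auto split: if_splits)
  qed
  then show ?thesis using cK cl compact_Int_closed by simp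
qed

lemma sph_min:
  assumes "N > 0" and "continuous_on (sph N) f"
  shows "\<exists>x\<in>sph N. \<forall>y\<in>sph N. (f x::real) \<le> f y"
proof (rule continuous_attains_inf[OF compact_sph _ assms(2)])
  have "(\<lambda>i. if i = 0 then 1 else 0) \<in> sph N" using assms by (auto simp: sph_def if_distrib cong: if_cong)
  then show "sph N \<noteq> {}" by blast
qed

definition qf :: "nat \<Rightarrow> (nat\<Rightarrow>nat\<Rightarrow>real) \<Rightarrow> (nat\<Rightarrow>real) \<Rightarrow> real" where
  "qf N M x = (\<Sum>i<N. \<Sum>j<N. M i j * x i * x j)"
definition bil :: "nat \<Rightarrow> (nat\<Rightarrow>nat\<Rightarrow>real) \<Rightarrow> (nat\<Rightarrow>real) \<Rightarrow> (nat\<Rightarrow>real) \<Rightarrow> real" where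
  "bil N M x y = (\<Sum>i<N. \<Sum>j<N. M i j * x i * y j)"
definition mv :: "nat \<Rightarrow> (nat\<Rightarrow>nat\<Rightarrow>real) \<Rightarrow> (nat\<Rightarrow>real) \<Rightarrow> nat \<Rightarrow> real" where
  "mv N M x = (\<lambda>i. \<Sum>j<N. M i j * x j)"
definition symm :: "nat \<Rightarrow> (nat\<Rightarrow>nat\<Rightarrow>real) \<Rightarrow> bool" where
  "symm N M \<longleftrightarrow> (\<forall>i<N. \<forall>j<N. M i j = M j i)"
definition evec :: "nat \<Rightarrow> nat \<Rightarrow> real" where
  "evec i = (\<lambda>j. if j = i then 1 else 0)"
definition prj :: "nat \<Rightarrow> nat \<Rightarrow> (nat \<Rightarrow> nat \<Rightarrow> real) \<Rightarrow> (nat\<Rightarrow>real) \<Rightarrow> nat \<Rightarrow> real" where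
  "prj N k u x = (\<lambda>i. x i - (\<Sum>j<k. ip N (u j) x * u j i))"

lemma bil_sym: "symm N M \<Longrightarrow> bil N M x y = bil N M y x"
  unfolding bil_def symm_def
  by (subst sum.swap) (auto intro!: sum.cong simp: mult_ac)

lemma qf_bil: "qf N M x = bil N M x x" by (simp add: qf_def bil_def)

lemma bil_add2: "bil N M x (\<lambda>i. y i + t * z i) = bil N M x y + t * bil N M x z"
  unfolding bil_def by (simp add: algebra_simps sum.distrib sum_distrib_left)
lemma bil_add1: "bil N M (\<lambda>i. y i + t * z i) x = bil N M y x + t * bil N M z x"
  unfolding bil_def by (simp add: algebra_simps sum.distrib sum_distrib_left)

lemma qf_add: assumes "symm N M"
  shows "qf N M (\<lambda>i. x i + t * z i) = qf N M x + 2 * t * bil N M x z + t^2 * qf N M z"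
  unfolding qf_bil bil_add1 bil_add2 using bil_sym[OF assms, of z x]
  by (simp add: algebra_simps power2_eq_square)

lemma ip_sym: "ip N x y = ip N y x" by (simp add: ip_def mult_ac)
lemma ip_add2: "ip N x (\<lambda>i. y i + t * z i) = ip N x y + t * ip N x z"
  unfolding ip_def by (simp add: algebra_simps sum.distrib sum_distrib_left)
lemma ip_add1: "ip N (\<lambda>i. y i + t * z i) x = ip N y x + t * ip N z x"
  unfolding ip_def by (simp add: algebra_simps sum.distrib sum_distrib_left)
lemma ip_scale2: "ip N x (\<lambda>i. t * z i) = t * ip N x z"
  unfolding ip_def by (simp add: algebra_simps sum_distrib_left)
lemma ip_scale1: "ip N (\<lambda>i. t * z i) x = t * ip N z x"
  unfolding ip_def by (simp add: algebra_simps sum_distrib_left)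
lemma ip_nonneg: "ip N x x \<ge> 0" unfolding ip_def by (intro sum_nonneg) simp
lemma ip_evec: "i < N \<Longrightarrow> ip N x (evec i) = x i"
  unfolding ip_def evec_def by (simp add: if_distrib cong: if_cong)
lemma ip_evec1: "i < N \<Longrightarrow> ip N (evec i) x = x i"
  using ip_evec ip_sym by metis

lemma ip_sum2: "ip N x (\<lambda>i. \<Sum>j\<in>J. f j i) = (\<Sum>j\<in>J. ip N x (f j))"
  unfolding ip_def by (simp add: sum_distrib_left) (rule sum.swap)
lemma ip_sum2': "ip N x (\<lambda>i. \<Sum>j\<in>J. c j * f j i) = (\<Sum>j\<in>J. c j * ip N x (f j))"
  unfolding ip_def by (simp add: sum_distrib_left) (subst sum.swap, simp add: mult_ac)

lemma quad_zero:
  fixes a b :: real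
  assumes "\<And>t. 0 \<le> a * t + b * t^2"
  shows "a = 0"
proof (rule ccontr)
  assume a: "a \<noteq> 0"
  define s where "s = 1 / (\<bar>b\<bar> + 1)"
  have s: "s > 0" "b * s < 1" unfolding s_def by (auto simp: field_simps)
  have "a * (- a * s) + b * (- a * s)^2 = a^2 * s * (b * s - 1)"
    by (simp add: algebra_simps power2_eq_square)
  also have "\<dots> < 0" using a s by (intro mult_pos_neg) auto
  finally show False using assms[of "- a * s"] by simp
qed

lemma ip_cong1: "(\<And>i. i < N \<Longrightarrow> x i = x' i) \<Longrightarrow> ip N x y = ip N x' y"
  unfolding ip_def by (rule sum.cong) auto
lemma ip_cong2: "(\<And>i. i < N \<Longrightarrow> y i = y' i) \<Longrightarrow> ip N x y = ip N x y'"
  unfolding ip_def by (rule sum.cong) auto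
lemma qf_cong: "(\<And>i. i < N \<Longrightarrow> x i = x' i) \<Longrightarrow> qf N M x = qf N M x'"
  unfolding qf_def by (intro sum.cong) auto
lemma bil_mv: "bil N M x y = ip N x (mv N M y)"
  unfolding bil_def ip_def mv_def by (simp add: sum_distrib_left mult_ac)
lemma bil_cong2: "(\<And>i. i < N \<Longrightarrow> y i = y' i) \<Longrightarrow> bil N M x y = bil N M x y'"
  unfolding bil_def by (intro sum.cong) auto
lemma bil_zero2: "(\<And>i. i < N \<Longrightarrow> y i = 0) \<Longrightarrow> bil N M x y = 0"
  unfolding bil_def by (intro sum.neutral) auto
lemma bil_evec: assumes "symm N M" "i < N" shows "bil N M x (evec i) = mv N M x i"
proof -
  have "bil N M x (evec i) = (\<Sum>a<N. M a i * x a)"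
    unfolding bil_def evec_def by (simp add: if_distrib cong: if_cong) (use assms(2) in simp)
  also have "\<dots> = (\<Sum>a<N. M i a * x a)" using assms unfolding symm_def by (intro sum.cong) auto
  finally show ?thesis by (simp add: mv_def)
qed
lemma ip_diff2: "ip N x (\<lambda>i. y i - z i) = ip N x y - ip N x z"
  unfolding ip_def by (simp add: algebra_simps sum_subtractf)
lemma bil_diff2: "bil N M x (\<lambda>i. y i - z i) = bil N M x y - bil N M x z"
  unfolding bil_def by (simp add: algebra_simps sum_subtractf)
lemma bil_sum2': "bil N M x (\<lambda>i. \<Sum>j\<in>J. c j * f j i) = (\<Sum>j\<in>J. c j * bil N M x (f j))"
  unfolding bil_mv ip_def mv_def
  by (simp add: sum_distrib_left sum_distrib_right mult_ac) (subst sum.swap, rule sum.cong, simp, subst sum.swap, simp)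
lemma sum_orth:
  fixes k :: nat
  assumes "l < k" "\<forall>j<k. \<forall>l<k. ip N (u j) (u l) = (if j = l then 1 else 0)"
  shows "(\<Sum>j<k. f j * ip N (u j) (u l)) = f l" "(\<Sum>j<k. f j * ip N (u l) (u j)) = f l"
proof -
  have "(\<Sum>j<k. f j * ip N (u j) (u l)) = (\<Sum>j<k. if j = l then f j else 0)"
    by (rule sum.cong) (use assms in auto)
  also have "\<dots> = f l" using assms(1) by (simp add: sum.delta)
  finally show "(\<Sum>j<k. f j * ip N (u j) (u l)) = f l" .
  have "(\<Sum>j<k. f j * ip N (u l) (u j)) = (\<Sum>j<k. if j = l then f j else 0)"
    by (rule sum.cong) (use assms in auto)
  also have "\<dots> = f l" using assms(1) by (simp add: sum.delta)
  finally show "(\<Sum>j<k. f j * ip N (u l) (u j)) = f l" .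
qed
lemma qf_scale: "qf N M (\<lambda>i. t * x i) = t^2 * qf N M x"
  unfolding qf_def by (simp add: sum_distrib_left power2_eq_square mult_ac)

lemma core_step:
  assumes sym: "symm N M" and kN: "k < N"
    and orth: "\<forall>j<k. \<forall>l<k. ip N (u j) (u l) = (if j = l then 1 else 0)"
    and eig: "\<forall>j<k. \<forall>i<N. mv N M (u j) i = \<mu> j * u j i"
  shows "\<exists>x m. x \<in> sph N \<and> (\<forall>j<k. ip N (u j) x = 0) \<and> (\<forall>i<N. mv N M x i = m * x i)
     \<and> (\<forall>y. (\<forall>j<k. ip N (u j) y = 0) \<longrightarrow> qf N M y \<ge> m * ip N y y)"
proof -
  define P where "P = prj N k u"
  define T where "T = (\<Sum>i<N. qf N M (P (evec i)))"
  define C where "C = \<bar>T\<bar> + 1"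
  define qB where "qB = (\<lambda>x. qf N M (P x) + C * (\<Sum>j<k. (ip N (u j) x)^2))"
  have ipP: "ip N (u l) (P x) = 0" if "l < k" for l x
  proof -
    have "ip N (u l) (P x) = ip N (u l) x - (\<Sum>j<k. ip N (u j) x * ip N (u l) (u j))"
      unfolding P_def prj_def ip_diff2 ip_sum2' ..
    also have "(\<Sum>j<k. ip N (u j) x * ip N (u l) (u j)) = ip N (u l) x"
      using sum_orth[OF that orth] by (simp add: ip_sym)
    finally show ?thesis by simp
  qed
  have Pu: "P (u l) = (\<lambda>i. 0)" if "l < k" for l
  proof
    fix i
    have "(\<Sum>j<k. u j i * ip N (u j) (u l)) = u l i"
      using sum_orth[OF that orth] by simp
    then have "(\<Sum>j<k. ip N (u j) (u l) * u j i) = u l i" by (simp add: mult.commute)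
    then show "P (u l) i = 0" unfolding P_def prj_def by simp
  qed
  have Padd: "P (\<lambda>i. x i + t * z i) = (\<lambda>i. P x i + t * P z i)" for x z t
    unfolding P_def prj_def by (rule ext) (simp add: ip_add2 algebra_simps sum.distrib sum_distrib_left)
  have Pscale: "P (\<lambda>i. t * z i) = (\<lambda>i. t * P z i)" for z t
    unfolding P_def prj_def by (rule ext) (simp add: ip_scale2 algebra_simps sum_distrib_left)
  have Pcong: "P x i = P x' i" if "\<And>i. i < N \<Longrightarrow> x i = x' i" "i < N" for x x' i
  proof -
    have "ip N (u j) x = ip N (u j) x'" for j by (rule ip_cong2) (use that in auto)
    then show ?thesis unfolding P_def prj_def using that by simp
  qed
  have Pperp: "P y = y" if "\<forall>j<k. ip N (u j) y = 0" for y
    unfolding P_def prj_def using that by simp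
  have qBcong: "qB x = qB x'" if "\<And>i. i < N \<Longrightarrow> x i = x' i" for x x'
  proof -
    have "qf N M (P x) = qf N M (P x')" by (rule qf_cong) (rule Pcong[OF that])
    moreover have "ip N (u j) x = ip N (u j) x'" for j by (rule ip_cong2) (use that in auto)
    ultimately show ?thesis unfolding qB_def by simp
  qed
  have qBscale: "qB (\<lambda>i. t * x i) = t^2 * qB x" for t x
    unfolding qB_def Pscale qf_scale ip_scale2 by (simp add: algebra_simps power_mult_distrib sum_distrib_left)
  have cont: "continuous_on (sph N) qB"
    unfolding qB_def P_def prj_def qf_def ip_def
    by (intro continuous_on_sum continuous_on_mult continuous_on_const continuous_on_diff continuous_on_add
          continuous_on_power cont_coord)
  obtain x0 where x0: "x0 \<in> sph N" "\<And>y. y \<in> sph N \<Longrightarrow> qB x0 \<le> qB y"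
    using sph_min[OF _ cont] kN by force
  define m where "m = qB x0"
  have sumqB: "(\<Sum>i<N. qB (evec i)) = T + C * k"
  proof -
    have "(\<Sum>i<N. (\<Sum>j<k. (ip N (u j) (evec i))^2)) = (\<Sum>j<k. (\<Sum>i<N. (u j i)^2))"
      by (subst sum.swap) (simp add: ip_evec)
    also have "\<dots> = (\<Sum>j<k. 1)"
      using orth by (intro sum.cong) (auto simp: ip_def power2_eq_square)
    finally have "(\<Sum>i<N. (\<Sum>j<k. (ip N (u j) (evec i))^2)) = k" by simp
    moreover have "(\<Sum>i<N. qB (evec i)) = T + C * (\<Sum>i<N. (\<Sum>j<k. (ip N (u j) (evec i))^2))"
      unfolding qB_def T_def by (simp add: sum.distrib sum_distrib_left)
    ultimately show ?thesis by simp
  qed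
  have "\<exists>i<N. qB (evec i) < C"
  proof (rule ccontr)
    assume "\<not> ?thesis"
    hence "(\<Sum>i<N. C) \<le> (\<Sum>i<N. qB (evec i))" by (intro sum_mono) auto
    hence "N * C \<le> T + C * k" using sumqB by simp
    moreover have "C * k + C \<le> N * C"
    proof -
      have "real k + 1 \<le> real N" using kN by simp
      moreover have "C > 0" unfolding C_def by simp
      ultimately have "C * (real k + 1) \<le> C * real N" by (intro mult_left_mono) auto
      then show ?thesis by (simp add: algebra_simps)
    qed
    ultimately show False unfolding C_def by linarith
  qed
  then obtain i0 where "i0 < N" "qB (evec i0) < C" by blast
  moreover have "evec i0 \<in> sph N" using \<open>i0 < N\<close> by (auto simp: sph_def evec_def if_distrib cong: if_cong)
  ultimately have mC: "m < C" using x0 unfolding m_def by fastforce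
  have lb: "qB y \<ge> m * ip N y y" for y
  proof (cases "ip N y y = 0")
    case True
    have "\<And>i. i < N \<Longrightarrow> y i = 0"
    proof -
      fix i assume "i < N"
      have "y i * y i \<le> ip N y y" unfolding ip_def by (rule member_le_sum) (use \<open>i<N\<close> in auto)
      then have "y i * y i = 0" using True zero_le_square[of "y i"] by linarith
      then show "y i = 0" by simp
    qed
    hence "qB y = qB (\<lambda>i. 0 * y i)" by (intro qBcong) auto
    then show ?thesis using True qBscale[of 0 y] by simp
  next
    case False
    define s where "s = sqrt (ip N y y)"
    have s: "s > 0" "s^2 = ip N y y" using False ip_nonneg[of N y] by (auto simp: s_def)
    define y' where "y' = (\<lambda>i. if i < N then y i / s else 0)"
    have "y' \<in> sph N"
    proof -
      have "(\<Sum>i<N. y' i * y' i) = ip N y y / s^2"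
        unfolding y'_def ip_def by (simp add: sum_divide_distrib power2_eq_square)
      then show ?thesis using s by (auto simp: sph_def y'_def)
    qed
    hence "m \<le> qB y'" using x0 m_def by simp
    moreover have "qB y' = qB (\<lambda>i. (1/s) * y i)" by (rule qBcong) (simp add: y'_def)
    moreover have "qB (\<lambda>i. (1/s) * y i) = (1/s)^2 * qB y" by (rule qBscale)
    ultimately have "m \<le> (1/s)^2 * qB y" by simp
    then have "m * s^2 \<le> qB y" using s by (simp add: field_simps power2_eq_square)
    then show ?thesis using s by simp
  qed
  have x0n: "ip N x0 x0 = 1" using x0 by (simp add: sph_def ip_def)
  define G where "G = (\<lambda>z. 2 * bil N M (P x0) (P z) + 2 * C * (\<Sum>j<k. ip N (u j) x0 * ip N (u j) z) - 2 * m * ip N x0 z)"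
  have Gz: "G z = 0" for z
  proof -
    define F where "F = (\<lambda>y. qB y - m * ip N y y)"
    have Fexp: "F (\<lambda>i. x0 i + t * z i) = G z * t + F z * t^2" for t
    proof -
      have e1: "qf N M (P (\<lambda>i. x0 i + t*z i)) = qf N M (P x0) + 2*t*bil N M (P x0) (P z) + t^2 * qf N M (P z)"
        by (simp add: Padd qf_add[OF sym])
      have e2: "(\<Sum>j<k. (ip N (u j) (\<lambda>i. x0 i + t*z i))^2) = (\<Sum>j<k. (ip N (u j) x0)^2)
          + 2*t*(\<Sum>j<k. ip N (u j) x0 * ip N (u j) z) + t^2*(\<Sum>j<k. (ip N (u j) z)^2)"
        by (simp add: ip_add2 power2_eq_square algebra_simps sum.distrib sum_distrib_left)
      have e3: "ip N (\<lambda>i. x0 i + t*z i) (\<lambda>i. x0 i + t*z i) = ip N x0 x0 + 2*t*ip N x0 z + t^2 * ip N z z"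
        by (simp add: ip_add1 ip_add2 ip_sym[of N z x0] algebra_simps power2_eq_square)
      have "F (\<lambda>i. x0 i + t * z i) = F x0 + G z * t + F z * t^2"
        unfolding F_def qB_def e1 e2 e3 G_def by (simp add: algebra_simps)
      moreover have "F x0 = 0" unfolding F_def using x0n m_def by simp
      ultimately show ?thesis by simp
    qed
    have "0 \<le> G z * t + F z * t^2" for t using lb[of "\<lambda>i. x0 i + t * z i"] Fexp[of t] unfolding F_def by simp
    then show ?thesis by (rule quad_zero)
  qed
  have perp: "ip N (u l) x0 = 0" if "l < k" for l
  proof -
    have "G (u l) = 0" by (rule Gz)
    moreover have "bil N M (P x0) (P (u l)) = 0" using Pu[OF that] by (intro bil_zero2) simp
    moreover have "(\<Sum>j<k. ip N (u j) x0 * ip N (u j) (u l)) = ip N (u l) x0"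
      using sum_orth[OF that orth] by (simp add: ip_sym)
    ultimately have "(C - m) * ip N (u l) x0 = 0" unfolding G_def by (simp add: ip_sym algebra_simps)
    then show ?thesis using mC by simp
  qed
  have Px0: "P x0 = x0" using perp by (intro Pperp) auto
  have eigx0: "mv N M x0 i = m * x0 i" if "i < N" for i
  proof -
    have g: "G (evec i) = 0" by (rule Gz)
    have "bil N M x0 (u j) = 0" if "j < k" for j
    proof -
      have "bil N M x0 (u j) = ip N x0 (\<lambda>i. \<mu> j * u j i)"
        unfolding bil_mv by (rule ip_cong2) (use eig that in auto)
      also have "\<dots> = 0" using perp[OF that] by (simp add: ip_scale2 ip_sym)
      finally show ?thesis .
    qed
    hence "bil N M x0 (P (evec i)) = bil N M x0 (evec i)"
      unfolding P_def prj_def bil_diff2 bil_sum2' by simp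
    with g show ?thesis
      using perp that unfolding G_def Px0 by (simp add: bil_evec[OF sym] ip_evec)
  qed
  have inv: "qf N M y \<ge> m * ip N y y" if "\<forall>j<k. ip N (u j) y = 0" for y
  proof -
    have "qB y = qf N M y" unfolding qB_def using Pperp[OF that] that by simp
    then show ?thesis using lb[of y] by simp
  qed
  show ?thesis using x0 perp eigx0 inv by blast
qed

lemma qf_eig: assumes "\<forall>i<N. mv N M x i = m * x i" shows "qf N M x = m * ip N x x"
proof -
  have "qf N M x = ip N x (\<lambda>i. m * x i)" unfolding qf_bil bil_mv by (rule ip_cong2) (use assms in auto)
  then show ?thesis by (simp add: ip_scale2)
qed

lemma spectral_aux:
  assumes sym: "symm N M"
  shows "k \<le> N \<Longrightarrow> \<exists>u \<mu>. (\<forall>j<k. \<forall>l<k. ip N (u j) (u l) = (if j = l then 1 else 0))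
     \<and> (\<forall>j<k. \<forall>i<N. mv N M (u j) i = \<mu> j * u j i)
     \<and> (\<forall>j l. j \<le> l \<longrightarrow> l < k \<longrightarrow> (\<mu> j::real) \<le> \<mu> l)
     \<and> (0 < k \<longrightarrow> (\<forall>y. (\<forall>j<k. ip N (u j) y = 0) \<longrightarrow> qf N M y \<ge> \<mu> (k-1) * ip N y y))"
proof (induction k)
  case 0
  show ?case by (rule exI[of _ "\<lambda>_ _. 0"], rule exI[of _ "\<lambda>_. 0"]) simp
next
  case (Suc k)
  then obtain u \<mu> where orth: "\<forall>j<k. \<forall>l<k. ip N (u j) (u l) = (if j = l then 1 else 0)"
    and eig: "\<forall>j<k. \<forall>i<N. mv N M (u j) i = \<mu> j * u j i"
    and srt: "\<forall>j l. j \<le> l \<longrightarrow> l < k \<longrightarrow> \<mu> j \<le> \<mu> l"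
    and inv: "0 < k \<longrightarrow> (\<forall>y. (\<forall>j<k. ip N (u j) y = 0) \<longrightarrow> qf N M y \<ge> \<mu> (k-1) * ip N y y)"
    by auto
  have kN: "k < N" using Suc.prems by simp
  obtain x m where x: "x \<in> sph N" and xp: "\<forall>j<k. ip N (u j) x = 0"
    and xe: "\<forall>i<N. mv N M x i = m * x i"
    and xi: "\<forall>y. (\<forall>j<k. ip N (u j) y = 0) \<longrightarrow> qf N M y \<ge> m * ip N y y"
    using core_step[OF sym kN orth eig] by blast
  have xn: "ip N x x = 1" using x by (simp add: sph_def ip_def)
  have qx: "qf N M x = m" using qf_eig[OF xe] xn by simp
  have mk: "\<mu> (k-1) \<le> m" if "0 < k"
  proof -
    have "qf N M x \<ge> \<mu> (k-1) * ip N x x" using inv that xp by blast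
    then show ?thesis using qx xn by simp
  qed
  define u' where "u' = u(k := x)"
  define \<mu>' where "\<mu>' = \<mu>(k := m)"
  have A: "\<forall>j<Suc k. \<forall>l<Suc k. ip N (u' j) (u' l) = (if j = l then 1 else 0)"
  proof (intro allI impI)
    fix j l assume j: "j < Suc k" and l: "l < Suc k"
    show "ip N (u' j) (u' l) = (if j = l then 1 else 0)"
    proof (cases "j = k")
      case True
      show ?thesis
      proof (cases "l = k")
        case True
        then show ?thesis using \<open>j = k\<close> xn by (simp add: u'_def)
      next
        case False
        then have "l < k" using l by simp
        then show ?thesis using \<open>j = k\<close> False xp ip_sym[of N x "u l"] by (simp add: u'_def)
      qed
    next
      case False
      then have "j < k" using j by simp
      show ?thesis
      proof (cases "l = k")
        case True
        then show ?thesis using \<open>j < k\<close> False xp by (simp add: u'_def)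
      next
        case False
        then have "l < k" using l by simp
        then show ?thesis using \<open>j < k\<close> \<open>j \<noteq> k\<close> False orth by (simp add: u'_def)
      qed
    qed
  qed
  have B: "\<forall>j<Suc k. \<forall>i<N. mv N M (u' j) i = \<mu>' j * u' j i"
  proof (intro allI impI)
    fix j i assume j: "j < Suc k" and i: "i < N"
    show "mv N M (u' j) i = \<mu>' j * u' j i"
    proof (cases "j = k")
      case True then show ?thesis using xe i by (simp add: u'_def \<mu>'_def)
    next
      case False then have "j < k" using j by simp
      then show ?thesis using eig i False by (simp add: u'_def \<mu>'_def)
    qed
  qed
  have C: "\<forall>j l. j \<le> l \<longrightarrow> l < Suc k \<longrightarrow> \<mu>' j \<le> \<mu>' l"
  proof (intro allI impI)
    fix j l assume jl: "j \<le> l" and l: "l < Suc k"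
    show "\<mu>' j \<le> \<mu>' l"
    proof (cases "l = k")
      case True
      show ?thesis
      proof (cases "j = k")
        case False
        then have "j < k" using jl True by simp
        then have "\<mu> j \<le> \<mu> (k-1)" using srt by simp
        moreover have "\<mu> (k-1) \<le> m" using mk \<open>j < k\<close> by simp
        ultimately show ?thesis using True False by (simp add: \<mu>'_def)
      qed (use True in \<open>simp add: \<mu>'_def\<close>)
    next
      case False
      then have "l < k" using l by simp
      then have "j \<noteq> k" using jl by simp
      then show ?thesis using srt jl \<open>l < k\<close> False by (simp add: \<mu>'_def)
    qed
  qed
  have D: "0 < Suc k \<longrightarrow> (\<forall>y. (\<forall>j<Suc k. ip N (u' j) y = 0) \<longrightarrow> qf N M y \<ge> \<mu>' (Suc k - 1) * ip N y y)"
  proof (intro allI impI)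
    fix y assume yp: "\<forall>j<Suc k. ip N (u' j) y = 0"
    have "\<forall>j<k. ip N (u j) y = 0"
    proof (intro allI impI)
      fix j assume "j < k"
      then have "ip N (u' j) y = 0" using yp by simp
      then show "ip N (u j) y = 0" using \<open>j < k\<close> by (simp add: u'_def)
    qed
    then have "qf N M y \<ge> m * ip N y y" using xi by blast
    then show "qf N M y \<ge> \<mu>' (Suc k - 1) * ip N y y" by (simp add: \<mu>'_def)
  qed
  show ?case by (rule exI[of _ u'], rule exI[of _ \<mu>'], intro conjI, fact A, fact B, fact C, fact D)
qed

theorem spectral:
  assumes "symm N M"
  shows "\<exists>u \<mu>. (\<forall>j<N. \<forall>l<N. ip N (u j) (u l) = (if j = l then 1 else 0))
     \<and> (\<forall>j<N. \<forall>i<N. mv N M (u j) i = \<mu> j * u j i)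
     \<and> (\<forall>j l. j \<le> l \<longrightarrow> l < N \<longrightarrow> (\<mu> j::real) \<le> \<mu> l)"
  using spectral_aux[OF assms order_refl] by (elim exE conjE) (intro exI conjI, assumption+)

lemma mat_mult_entry:
  assumes "i < n" "j < n"
  shows "(Matrix.mat n n f * Matrix.mat n n g) $$ (i,j) = (\<Sum>l<n. f (i,l) * g (l,j))"
  using assms by (simp add: scalar_prod_def atLeast0LessThan)

lemma proots_lin_prod: "proots (\<Prod>a\<leftarrow>xs. [:- a, 1:]) = mset (xs::real list)"
proof (induction xs)
  case (Cons a xs)
  have nz: "(\<Prod>a\<leftarrow>xs. [:- a, 1:]) \<noteq> 0" by (auto simp: prod_list_zero_iff)
  have e: "(\<Prod>a\<leftarrow>a # xs. [:- a, 1:]) = [:- a, 1:] * (\<Prod>a\<leftarrow>xs. [:- a, 1:])" by simp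
  have "proots (\<Prod>a\<leftarrow>a # xs. [:- a, 1:]) = proots [:- a, 1:] + proots (\<Prod>a\<leftarrow>xs. [:- a, 1:])"
    unfolding e by (rule proots_mult[OF _ nz]) simp
  also have "proots [:- a, 1:] = {#a#}" using proots_linear_factor[of "-a"] by simp
  finally show ?case using Cons by simp
qed simp

locale eigsys =
  fixes N :: nat and M :: "nat \<Rightarrow> nat \<Rightarrow> real" and u :: "nat \<Rightarrow> nat \<Rightarrow> real" and \<mu> :: "nat \<Rightarrow> real"
  assumes sym: "symm N M"
    and orth: "\<forall>j<N. \<forall>l<N. ip N (u j) (u l) = (if j = l then 1 else 0)"
    and eig: "\<forall>j<N. \<forall>i<N. mv N M (u j) i = \<mu> j * u j i"
begin

definition "Um = Matrix.mat N N (\<lambda>(i,k). u k i)"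
definition "UTm = Matrix.mat N N (\<lambda>(k,i). u k i)"

lemma UT_U: "UTm * Um = 1\<^sub>m N"
proof (rule eq_matI)
  fix i j assume "i < dim_row (1\<^sub>m N)" "j < dim_col (1\<^sub>m N)"
  then have ij: "i < N" "j < N" by auto
  have "(UTm * Um) $$ (i,j) = (\<Sum>l<N. u i l * u j l)"
    unfolding UTm_def Um_def by (subst mat_mult_entry) (use ij in auto)
  also have "\<dots> = ip N (u i) (u j)" by (simp add: ip_def)
  finally show "(UTm * Um) $$ (i,j) = 1\<^sub>m N $$ (i,j)" using orth ij by simp
qed (auto simp: UTm_def Um_def)

lemma U_UT: "Um * UTm = 1\<^sub>m N"
  by (rule mat_mult_left_right_inverse[OF _ _ UT_U]) (auto simp: UTm_def Um_def)

lemma complete: "i < N \<Longrightarrow> j < N \<Longrightarrow> (\<Sum>k<N. u k i * u k j) = (if i = j then 1 else 0)"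
proof -
  assume ij: "i < N" "j < N"
  have "(Um * UTm) $$ (i,j) = (\<Sum>k<N. u k i * u k j)"
    unfolding UTm_def Um_def by (subst mat_mult_entry) (use ij in auto)
  then show ?thesis using U_UT ij by simp
qed

lemma expand: "i < N \<Longrightarrow> (\<Sum>k<N. ip N (u k) x * u k i) = x i"
proof -
  assume i: "i < N"
  have "(\<Sum>k<N. ip N (u k) x * u k i) = (\<Sum>l<N. x l * (\<Sum>k<N. u k l * u k i))"
    unfolding ip_def by (simp add: sum_distrib_left sum_distrib_right mult_ac) (rule sum.swap)
  also have "\<dots> = (\<Sum>l<N. if l = i then x l else 0)"
    by (rule sum.cong) (use i complete in auto)
  also have "\<dots> = x i" using i by (simp add: sum.delta)
  finally show ?thesis .
qed

lemma parseval: "(\<Sum>k<N. (ip N (u k) x)^2) = ip N x x"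
proof -
  have "ip N x x = ip N x (\<lambda>i. \<Sum>k<N. ip N (u k) x * u k i)"
    by (rule ip_cong2) (simp add: expand)
  also have "\<dots> = (\<Sum>k<N. ip N (u k) x * ip N x (u k))" by (rule ip_sum2')
  finally show ?thesis by (simp add: ip_sym power2_eq_square)
qed

lemma mv_expand: "i < N \<Longrightarrow> mv N M x i = (\<Sum>k<N. \<mu> k * ip N (u k) x * u k i)"
proof -
  assume i: "i < N"
  have "mv N M x i = (\<Sum>l<N. M i l * (\<Sum>k<N. ip N (u k) x * u k l))"
    unfolding mv_def using expand by (intro sum.cong) auto
  also have "\<dots> = (\<Sum>k<N. ip N (u k) x * mv N M (u k) i)"
    unfolding mv_def by (simp add: sum_distrib_left sum_distrib_right mult_ac) (rule sum.swap)
  also have "\<dots> = (\<Sum>k<N. \<mu> k * ip N (u k) x * u k i)"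
    using eig i by (intro sum.cong) auto
  finally show ?thesis .
qed

lemma qf_expand: "qf N M x = (\<Sum>k<N. \<mu> k * (ip N (u k) x)^2)"
proof -
  have "qf N M x = ip N x (\<lambda>i. \<Sum>k<N. \<mu> k * ip N (u k) x * u k i)"
    unfolding qf_bil bil_mv by (rule ip_cong2) (simp add: mv_expand)
  also have "\<dots> = (\<Sum>k<N. (\<mu> k * ip N (u k) x) * ip N x (u k))" by (rule ip_sum2')
  finally show ?thesis by (simp add: ip_sym power2_eq_square mult_ac)
qed

definition "Dm = Matrix.mat N N (\<lambda>(i,j). if i = j then \<mu> i else 0)"
definition "Am = Matrix.mat N N (\<lambda>(i,j). M i j)"

lemma A_decomp: "Am = Um * Dm * UTm"
proof (rule eq_matI)
  fix i j assume "i < dim_row (Um * Dm * UTm)" "j < dim_col (Um * Dm * UTm)"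
  then have ij: "i < N" "j < N" by (auto simp: Um_def UTm_def)
  have "Um * Dm = Matrix.mat N N (\<lambda>(i,k). u k i * \<mu> k)"
  proof (rule eq_matI)
    fix a b assume "a < dim_row (Matrix.mat N N (\<lambda>(i,k). u k i * \<mu> k))" "b < dim_col (Matrix.mat N N (\<lambda>(i,k). u k i * \<mu> k))"
    then have ab: "a < N" "b < N" by auto
    have "(Um * Dm) $$ (a,b) = (\<Sum>l<N. u l a * (if l = b then \<mu> l else 0))"
      unfolding Um_def Dm_def by (subst mat_mult_entry) (use ab in auto)
    also have "\<dots> = u b a * \<mu> b" using ab by (simp add: if_distrib sum.delta' cong: if_cong)
    finally show "(Um * Dm) $$ (a,b) = Matrix.mat N N (\<lambda>(i,k). u k i * \<mu> k) $$ (a,b)" using ab by simp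
  qed (auto simp: Um_def Dm_def)
  then have "(Um * Dm * UTm) $$ (i,j) = (Matrix.mat N N (\<lambda>(i,k). u k i * \<mu> k) * Matrix.mat N N (\<lambda>(k,i). u k i)) $$ (i,j)"
    unfolding UTm_def by simp
  also have "\<dots> = (\<Sum>k<N. u k i * \<mu> k * u k j)"
    by (subst mat_mult_entry) (use ij in auto)
  also have "\<dots> = (\<Sum>k<N. \<mu> k * ip N (u k) (evec j) * u k i)"
    using ij by (intro sum.cong) (auto simp: ip_evec mult_ac)
  also have "\<dots> = mv N M (evec j) i" using mv_expand ij by simp
  also have "\<dots> = M i j" using ij by (simp add: mv_def evec_def if_distrib cong: if_cong)
  finally show "Am $$ (i,j) = (Um * Dm * UTm) $$ (i,j)" using ij by (simp add: Am_def)
qed (auto simp: Am_def Um_def UTm_def)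

lemma char_poly_Am: "char_poly Am = (\<Prod>a\<leftarrow>map \<mu> [0..<N]. [:- a, 1:])"
proof -
  have "similar_mat_wit Am Dm Um UTm"
    unfolding similar_mat_wit_def Let_def using A_decomp U_UT UT_U
    by (auto simp: Am_def Dm_def Um_def UTm_def)
  then have "char_poly Am = char_poly Dm" by (intro char_poly_similar) (auto simp: similar_mat_def)
  also have "\<dots> = (\<Prod>a\<leftarrow>diag_mat Dm. [:- a, 1:])"
    by (rule char_poly_upper_triangular[of Dm N]) (auto simp: Dm_def Matrix.upper_triangular_def)
  also have "diag_mat Dm = map \<mu> [0..<N]" by (simp add: diag_mat_def Dm_def)
  finally show ?thesis .
qed

lemma proots_Am: "proots (char_poly Am) = mset (map \<mu> [0..<N])"
  unfolding char_poly_Am by (rule proots_lin_prod)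

end

definition ba :: "nat \<Rightarrow> (nat \<Rightarrow> nat \<Rightarrow> nat \<Rightarrow> nat \<Rightarrow> real) \<Rightarrow> (nat \<Rightarrow> nat \<Rightarrow> real) \<Rightarrow> (nat \<Rightarrow> nat \<Rightarrow> real) \<Rightarrow> real" where
  "ba n Rm X Y = (\<Sum>p<n. \<Sum>q<n. \<Sum>r<n. \<Sum>s<n. Rm p q r s * X p q * Y r s) / 4"
definition wedge :: "(nat \<Rightarrow> real) \<Rightarrow> (nat \<Rightarrow> real) \<Rightarrow> nat \<Rightarrow> nat \<Rightarrow> real" where
  "wedge x y = (\<lambda>p q. x p * y q - x q * y p)"

definition sym_tensor :: "nat \<Rightarrow> (nat \<Rightarrow> nat \<Rightarrow> nat \<Rightarrow> nat \<Rightarrow> real) \<Rightarrow> bool" where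
  "sym_tensor n Rm \<longleftrightarrow> (\<forall>i<n. \<forall>j<n. \<forall>k<n. \<forall>l<n. Rm i j k l = - Rm j i k l \<and> Rm i j k l = Rm k l i j)"

lemma alg_sym: "alg_curv_tensor n Rm \<Longrightarrow> sym_tensor n Rm"
  unfolding alg_curv_tensor_def sym_tensor_def by blast

definition "Ev a b = wedge (evec a) (evec b)"
definition "Hv v i j k = (\<lambda>p q. v i * Ev j k p q + v j * Ev k i p q + v k * Ev i j p q)"
definition "ricQ n Rm v = (\<Sum>j<n. \<Sum>k<n. ricci n Rm j k * v j * v k)"

context
  fixes n :: nat and Rm :: "nat \<Rightarrow> nat \<Rightarrow> nat \<Rightarrow> nat \<Rightarrow> real"
  assumes ac: "sym_tensor n Rm"
begin

lemma acA: "i < n \<Longrightarrow> j < n \<Longrightarrow> k < n \<Longrightarrow> l < n \<Longrightarrow> Rm i j k l = - Rm j i k l"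
  using ac unfolding sym_tensor_def by blast
lemma acS: "i < n \<Longrightarrow> j < n \<Longrightarrow> k < n \<Longrightarrow> l < n \<Longrightarrow> Rm i j k l = Rm k l i j"
  using ac unfolding sym_tensor_def by blast
lemma acB: "i < n \<Longrightarrow> j < n \<Longrightarrow> k < n \<Longrightarrow> l < n \<Longrightarrow> Rm i j k l = - Rm i j l k"
  using acA acS by metis

lemma S4_swap_pq: "(\<Sum>p<n. \<Sum>q<n. \<Sum>r<n. \<Sum>s<n. f p q r s) = (\<Sum>p<n. \<Sum>q<n. \<Sum>r<n. \<Sum>s<n. (f q p r s::real))"
  by (rule sum.swap)
lemma S4_swap_rs: "(\<Sum>p<n. \<Sum>q<n. \<Sum>r<n. \<Sum>s<n. f p q r s) = (\<Sum>p<n. \<Sum>q<n. \<Sum>r<n. \<Sum>s<n. (f p q s r::real))"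
  by (rule sum.cong[OF refl], rule sum.cong[OF refl], rule sum.swap)

lemma ba_wedge: "ba n Rm (wedge x y) (wedge z w) = curv4 n Rm x y z w"
proof -
  define T1 where "T1 = (\<lambda>p q r s. Rm p q r s * x p * y q * z r * w s)"
  let ?S = "\<lambda>f. (\<Sum>p<n. \<Sum>q<n. \<Sum>r<n. \<Sum>s<n. (f p q r s::real))"
  have e: "?S (\<lambda>p q r s. Rm p q r s * wedge x y p q * wedge z w r s)
     = ?S T1 - ?S (\<lambda>p q r s. Rm p q r s * x p * y q * z s * w r)
       - ?S (\<lambda>p q r s. Rm p q r s * x q * y p * z r * w s)
       + ?S (\<lambda>p q r s. Rm p q r s * x q * y p * z s * w r)"
    unfolding wedge_def T1_def by (simp add: algebra_simps sum.distrib sum_subtractf)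
  have t2: "?S (\<lambda>p q r s. Rm p q r s * x p * y q * z s * w r) = - ?S T1"
    apply (subst S4_swap_rs)
    apply (simp add: sum_negf[symmetric] T1_def)
    apply (intro sum.cong refl)
    apply (subst acB) apply auto
    done
  have t3: "?S (\<lambda>p q r s. Rm p q r s * x q * y p * z r * w s) = - ?S T1"
    apply (subst S4_swap_pq)
    apply (simp add: sum_negf[symmetric] T1_def)
    apply (intro sum.cong refl)
    apply (subst acA) apply auto
    done
  have t4: "?S (\<lambda>p q r s. Rm p q r s * x q * y p * z s * w r) = ?S T1"
    apply (subst S4_swap_pq)
    apply (subst S4_swap_rs)
    apply (simp add: T1_def)
    apply (intro sum.cong refl)
    apply (subst acA) apply simp_all
    apply (subst acB) apply auto
    done
  have "?S T1 = curv4 n Rm x y z w" unfolding T1_def curv4_def ..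
  then show ?thesis unfolding ba_def e t2 t3 t4 by simp
qed


lemma ba_lin1: "ba n Rm (\<lambda>p q. a * X p q + b * Y p q + c * Z p q) W = a * ba n Rm X W + b * ba n Rm Y W + c * ba n Rm Z W"
  unfolding ba_def by (simp add: algebra_simps sum.distrib sum_distrib_left add_divide_distrib)
lemma ba_lin2: "ba n Rm W (\<lambda>p q. a * X p q + b * Y p q + c * Z p q) = a * ba n Rm W X + b * ba n Rm W Y + c * ba n Rm W Z"
  unfolding ba_def by (simp add: algebra_simps sum.distrib sum_distrib_left add_divide_distrib)

lemma curv4_evec: assumes "a < n" "b < n" "c < n" "d < n"
  shows "curv4 n Rm (evec a) (evec b) (evec c) (evec d) = Rm a b c d"
proof -
  have se: "\<And>f d. d < n \<Longrightarrow> (\<Sum>l<n. f l * evec d l) = (f d::real)"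
    unfolding evec_def by (simp add: if_distrib sum.delta cong: if_cong)
  show ?thesis unfolding curv4_def by (simp only: se[OF assms(4)] se[OF assms(3)] se[OF assms(2)] se[OF assms(1)])
qed


lemma ba_Ev: "a < n \<Longrightarrow> b < n \<Longrightarrow> c < n \<Longrightarrow> d < n \<Longrightarrow> ba n Rm (Ev a b) (Ev c d) = Rm a b c d"
  unfolding Ev_def ba_wedge by (rule curv4_evec)

lemma qa_Hv: assumes "i < n" "j < n" "k < n"
  shows "ba n Rm (Hv v i j k) (Hv v i j k) = v i^2 * Rm j k j k + v j^2 * Rm k i k i + v k^2 * Rm i j i j
     + 2 * v i * v j * Rm j k k i + 2 * v i * v k * Rm j k i j + 2 * v j * v k * Rm k i i j"
proof -
  have "ba n Rm (Hv v i j k) (Hv v i j k) =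
      v i * (v i * Rm j k j k + v j * Rm j k k i + v k * Rm j k i j)
    + v j * (v i * Rm k i j k + v j * Rm k i k i + v k * Rm k i i j)
    + v k * (v i * Rm i j j k + v j * Rm i j k i + v k * Rm i j i j)"
    unfolding Hv_def ba_lin1 ba_lin2 using assms by (simp add: ba_Ev)
  moreover have "Rm k i j k = Rm j k k i" "Rm i j j k = Rm j k i j" "Rm i j k i = Rm k i i j"
    using acS assms by auto
  ultimately show ?thesis by (simp add: algebra_simps power2_eq_square)
qed


lemma scal_alt: "scal n Rm = (\<Sum>j<n. \<Sum>k<n. Rm j k j k)"
  unfolding scal_def ricci_def by (rule sum.swap)

lemma I2: "(\<Sum>i<n. \<Sum>j<n. \<Sum>k<n. ba n Rm (Hv v i j k) (Hv v i j k)) = 3 * ip n v v * scal n Rm - 6 * ricQ n Rm v"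
proof -
  let ?S = "\<lambda>f. (\<Sum>i<n. \<Sum>j<n. \<Sum>k<n. (f i j k::real))"
  have e: "?S (\<lambda>i j k. ba n Rm (Hv v i j k) (Hv v i j k)) =
      ?S (\<lambda>i j k. v i^2 * Rm j k j k) + ?S (\<lambda>i j k. v j^2 * Rm k i k i) + ?S (\<lambda>i j k. v k^2 * Rm i j i j)
     + 2 * ?S (\<lambda>i j k. v i * v j * Rm j k k i) + 2 * ?S (\<lambda>i j k. v i * v k * Rm j k i j)
     + 2 * ?S (\<lambda>i j k. v j * v k * Rm k i i j)"
  proof -
    have "?S (\<lambda>i j k. ba n Rm (Hv v i j k) (Hv v i j k)) = ?S (\<lambda>i j k. v i^2 * Rm j k j k + v j^2 * Rm k i k i + v k^2 * Rm i j i j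
     + 2 * v i * v j * Rm j k k i + 2 * v i * v k * Rm j k i j + 2 * v j * v k * Rm k i i j)"
      by (intro sum.cong refl) (simp add: qa_Hv)
    then show ?thesis by (simp add: sum.distrib sum_distrib_left mult.assoc)
  qed
  have s1: "?S (\<lambda>i j k. v i^2 * Rm j k j k) = ip n v v * scal n Rm"
  proof -
    have "ip n v v * scal n Rm = (\<Sum>i<n. v i^2 * (\<Sum>j<n. \<Sum>k<n. Rm j k j k))"
      unfolding scal_alt ip_def by (simp add: sum_distrib_right power2_eq_square)
    then show ?thesis by (simp add: sum_distrib_left)
  qed
  have s2: "?S (\<lambda>i j k. v j^2 * Rm k i k i) = ip n v v * scal n Rm"
  proof -
    have "?S (\<lambda>i j k. v j^2 * Rm k i k i) = (\<Sum>j<n. \<Sum>i<n. \<Sum>k<n. v j^2 * Rm k i k i)" by (rule sum.swap)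
    also have "\<dots> = ip n v v * (\<Sum>i<n. \<Sum>k<n. Rm k i k i)"
    proof -
      have "ip n v v * (\<Sum>i<n. \<Sum>k<n. Rm k i k i) = (\<Sum>j<n. v j^2 * (\<Sum>i<n. \<Sum>k<n. Rm k i k i))"
        unfolding ip_def by (simp add: sum_distrib_right power2_eq_square)
      then show ?thesis by (simp add: sum_distrib_left)
    qed
    also have "(\<Sum>i<n. \<Sum>k<n. Rm k i k i) = scal n Rm" unfolding scal_def ricci_def ..
    finally show ?thesis .
  qed
  have s3: "?S (\<lambda>i j k. v k^2 * Rm i j i j) = ip n v v * scal n Rm"
  proof -
    have "?S (\<lambda>i j k. v k^2 * Rm i j i j) = (\<Sum>i<n. \<Sum>k<n. \<Sum>j<n. v k^2 * Rm i j i j)"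
      by (rule sum.cong[OF refl], rule sum.swap)
    also have "\<dots> = (\<Sum>k<n. \<Sum>i<n. \<Sum>j<n. v k^2 * Rm i j i j)" by (rule sum.swap)
    also have "\<dots> = ip n v v * (\<Sum>i<n. \<Sum>j<n. Rm i j i j)"
    proof -
      have "ip n v v * (\<Sum>i<n. \<Sum>j<n. Rm i j i j) = (\<Sum>k<n. v k^2 * (\<Sum>i<n. \<Sum>j<n. Rm i j i j))"
        unfolding ip_def by (simp add: sum_distrib_right power2_eq_square)
      then show ?thesis by (simp add: sum_distrib_left)
    qed
    also have "(\<Sum>i<n. \<Sum>j<n. Rm i j i j) = scal n Rm" unfolding scal_alt ..
    finally show ?thesis .
  qed
  have c1: "?S (\<lambda>i j k. v i * v j * Rm j k k i) = - ricQ n Rm v"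
  proof -
    have "?S (\<lambda>i j k. v i * v j * Rm j k k i) = ?S (\<lambda>i j k. - (v i * v j * Rm k i k j))"
    proof (intro sum.cong refl)
      fix i j k assume "i \<in> {..<n}" "j \<in> {..<n}" "k \<in> {..<n}"
      then have "Rm j k k i = - Rm k i k j" using acA[of j k k i] acS[of k j k i] by simp
      then show "v i * v j * Rm j k k i = - (v i * v j * Rm k i k j)" by simp
    qed
    also have "\<dots> = - (\<Sum>i<n. \<Sum>j<n. ricci n Rm i j * v i * v j)"
      unfolding ricci_def by (simp add: sum_negf sum_distrib_left sum_distrib_right mult_ac)
    finally show ?thesis unfolding ricQ_def .
  qed
  have c2: "?S (\<lambda>i j k. v i * v k * Rm j k i j) = - ricQ n Rm v"
  proof -
    have "?S (\<lambda>i j k. v i * v k * Rm j k i j) = (\<Sum>i<n. \<Sum>k<n. \<Sum>j<n. v i * v k * Rm j k i j)"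
      by (rule sum.cong[OF refl], rule sum.swap)
    also have "\<dots> = (\<Sum>i<n. \<Sum>k<n. \<Sum>j<n. - (v i * v k * Rm j i j k))"
    proof (intro sum.cong refl)
      fix i j k assume "i \<in> {..<n}" "j \<in> {..<n}" "k \<in> {..<n}"
      then have "Rm j k i j = - Rm j i j k" using acS[of j k i j] acB[of i j j k] acA[of i j k j] acB[of j i k j] by simp
      then show "v i * v k * Rm j k i j = - (v i * v k * Rm j i j k)" by simp
    qed
    also have "\<dots> = - (\<Sum>i<n. \<Sum>k<n. ricci n Rm i k * v i * v k)"
      unfolding ricci_def by (simp add: sum_negf sum_distrib_left sum_distrib_right mult_ac)
    finally show ?thesis unfolding ricQ_def .
  qed
  have c3: "?S (\<lambda>i j k. v j * v k * Rm k i i j) = - ricQ n Rm v"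
  proof -
    have "?S (\<lambda>i j k. v j * v k * Rm k i i j) = (\<Sum>j<n. \<Sum>i<n. \<Sum>k<n. v j * v k * Rm k i i j)" by (rule sum.swap)
    also have "\<dots> = (\<Sum>j<n. \<Sum>k<n. \<Sum>i<n. v j * v k * Rm k i i j)"
      by (rule sum.cong[OF refl], rule sum.swap)
    also have "\<dots> = (\<Sum>j<n. \<Sum>k<n. \<Sum>i<n. - (v j * v k * Rm i j i k))"
    proof (intro sum.cong refl)
      fix i j k assume "i \<in> {..<n}" "j \<in> {..<n}" "k \<in> {..<n}"
      then have "Rm k i i j = - Rm i j i k" using acA[of k i i j] acS[of i k i j] by simp
      then show "v j * v k * Rm k i i j = - (v j * v k * Rm i j i k)" by simp
    qed
    also have "\<dots> = - (\<Sum>j<n. \<Sum>k<n. ricci n Rm j k * v j * v k)"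
      unfolding ricci_def by (simp add: sum_negf sum_distrib_left sum_distrib_right mult_ac)
    finally show ?thesis unfolding ricQ_def .
  qed
  show ?thesis unfolding e s1 s2 s3 c1 c2 c3 by simp
qed

end

lemma disc:
  fixes a b c :: real
  assumes "\<And>t. 0 \<le> a + 2 * b * t + c * t^2" "c \<ge> 0"
  shows "b^2 \<le> a * c"
proof (cases "c = 0")
  case True
  have "b = 0"
  proof (rule ccontr)
    assume "b \<noteq> 0"
    have "0 \<le> a + 2 * b * (-(a+1)/(2*b)) + c * (-(a+1)/(2*b))^2" by (rule assms(1))
    then show False using \<open>b \<noteq> 0\<close> True by (simp add: field_simps)
  qed
  then show ?thesis using True by simp
next
  case False
  then have c: "c > 0" using assms(2) by simp
  have "0 \<le> a + 2 * b * (-b/c) + c * (-b/c)^2" by (rule assms(1))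
  also have "\<dots> = a - b^2 / c" using c by (simp add: field_simps power2_eq_square)
  finally have "b^2 / c \<le> a" by simp
  then show ?thesis using c by (simp add: field_simps mult.commute)
qed

lemma sum_evec_r: "d < n \<Longrightarrow> (\<Sum>l<n. f l * evec d l) = (f d::real)"
  unfolding evec_def by (simp add: if_distrib sum.delta cong: if_cong)
lemma qf_evec: "j < n \<Longrightarrow> qf n P (evec j) = P j j"
  unfolding qf_bil bil_mv by (simp add: ip_evec1 mv_def sum_evec_r)

lemma final_ineq:
  fixes P :: "nat \<Rightarrow> nat \<Rightarrow> real"
  assumes sym: "symm n P" and psd: "\<And>v. qf n P v \<ge> 0"
    and up: "\<And>v. qf n P v \<le> (R/2) * ip n v v" and R: "R = (\<Sum>j<n. P j j)"
  shows "R^2 - 2 * (\<Sum>j<n. \<Sum>k<n. (P j k)^2) \<ge> 0"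
proof -
  have Pjj: "P j j \<ge> 0" if "j < n" for j
  proof -
    have "qf n P (evec j) = P j j" using that by (rule qf_evec)
    then show ?thesis using psd[of "evec j"] by simp
  qed
  have R0: "R \<ge> 0" unfolding R using Pjj by (intro sum_nonneg) auto
  have rj: "(\<Sum>k<n. (P j k)^2) \<le> P j j * (R/2)" if j: "j < n" for j
  proof -
    define y where "y = (\<lambda>k. P j k)"
    define r where "r = (\<Sum>k<n. (P j k)^2)"
    have r0: "r \<ge> 0" unfolding r_def by (intro sum_nonneg) auto
    have b: "bil n P (evec j) y = r"
      unfolding bil_mv r_def y_def using j by (simp add: ip_evec1 mv_def power2_eq_square)
    have qe: "qf n P (evec j) = P j j" using j by (rule qf_evec)
    have qy: "qf n P y \<le> (R/2) * r"
      using up[of y] unfolding r_def y_def ip_def by (simp add: power2_eq_square)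
    have "(bil n P (evec j) y)^2 \<le> qf n P (evec j) * qf n P y"
    proof (rule disc)
      fix t
      show "0 \<le> qf n P (evec j) + 2 * bil n P (evec j) y * t + qf n P y * t^2"
        using psd[of "\<lambda>i. evec j i + t * y i"] qf_add[OF sym] by (simp add: mult_ac)
    qed (rule psd)
    then have "r^2 \<le> P j j * qf n P y" using b qe by simp
    also have "\<dots> \<le> P j j * ((R/2) * r)" using qy Pjj[OF j] by (intro mult_left_mono) auto
    finally have "r * r \<le> (P j j * (R/2)) * r" by (simp add: power2_eq_square mult_ac)
    then have "r \<le> P j j * (R/2)"
      using r0 Pjj[OF j] R0 by (cases "r = 0") (auto simp: mult_le_cancel_right)
    then show ?thesis unfolding r_def .
  qed
  have "(\<Sum>j<n. \<Sum>k<n. (P j k)^2) \<le> (\<Sum>j<n. P j j * (R/2))" by (intro sum_mono rj) auto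
  also have "\<dots> = R * R / 2" unfolding R by (simp add: sum_distrib_right)
  finally show ?thesis by (simp add: power2_eq_square)
qed

lemma cross_id:
  fixes a1 a2 a3 b1 b2 b3 x y z I J K I' J' K' :: real
  assumes "x = a2*b3 - a3*b2" "y = a3*b1 - a1*b3" "z = a1*b2 - a2*b1"
  shows "x*(J*K' - J'*K) + y*(K*I' - K'*I) + z*(I*J' - I'*J) =
    (a1*I + a2*J + a3*K)*(b1*I' + b2*J' + b3*K') - (a1*I' + a2*J' + a3*K')*(b1*I + b2*J + b3*K)"
  unfolding assms by (simp add: algebra_simps)

lemma cross_sol:
  fixes x y z :: real
  shows "\<exists>a1 a2 a3 b1 b2 b3. x = a2*b3 - a3*b2 \<and> y = a3*b1 - a1*b3 \<and> z = a1*b2 - a2*b1"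
proof (cases "x^2 + y^2 = 0")
  case True
  then have "x = 0" "y = 0" by (simp_all add: sum_power2_eq_zero_iff)
  then show ?thesis by (intro exI[of _ 1] exI[of _ 0] exI[of _ 0] exI[of _ 0] exI[of _ z] exI[of _ 0]) simp
next
  case False
  define d where "d = x^2 + y^2"
  have d: "d \<noteq> 0" using False d_def by simp
  have e1: "x = (-x)*(-1) - 0*(z*y/d)" by simp
  have e2: "y = 0*(z*x/d) - y*(-1)" by simp
  have "y*(z*y/d) - (-x)*(z*x/d) = z*(x^2+y^2)/d" using d by (simp add: field_simps power2_eq_square)
  also have "\<dots> = z" using d unfolding d_def by simp
  finally have e3: "z = y*(z*y/d) - (-x)*(z*x/d)" by simp
  show ?thesis using e1 e2 e3 by blast
qed

lemma Hv_wedge: "\<exists>A B. Hv v i j k = wedge A B"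
proof -
  obtain a1 a2 a3 b1 b2 b3 where c: "v i = a2*b3 - a3*b2" "v j = a3*b1 - a1*b3" "v k = a1*b2 - a2*b1"
    using cross_sol by blast
  define A where "A = (\<lambda>p. a1 * evec i p + a2 * evec j p + a3 * evec k p)"
  define B where "B = (\<lambda>p. b1 * evec i p + b2 * evec j p + b3 * evec k p)"
  have "Hv v i j k = wedge A B"
  proof (intro ext)
    fix p q
    show "Hv v i j k p q = wedge A B p q"
      unfolding Hv_def Ev_def wedge_def A_def B_def by (rule cross_id[OF c])
  qed
  then show ?thesis by blast
qed

lemma curv4_alt: "curv4 n Rm x y z w = ip n x (\<lambda>a. ip n y (\<lambda>b. ip n z (\<lambda>c. ip n w (\<lambda>d. Rm a b c d))))"
  unfolding curv4_def ip_def by (simp add: sum_distrib_left mult_ac)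

lemma curv4_scale: "curv4 n Rm (\<lambda>i. a * x i) (\<lambda>i. b * y i) (\<lambda>i. a * x i) (\<lambda>i. b * y i) = (a*b)^2 * curv4 n Rm x y x y"
  unfolding curv4_def by (simp add: sum_distrib_left mult_ac power2_eq_square)

lemma curv4_zero1: "(\<And>i. i < n \<Longrightarrow> x i = 0) \<Longrightarrow> curv4 n Rm x y z w = 0"
  unfolding curv4_def by (intro sum.neutral) auto
lemma curv4_zero2: "(\<And>i. i < n \<Longrightarrow> y i = 0) \<Longrightarrow> curv4 n Rm x y z w = 0"
  unfolding curv4_def by (intro sum.neutral ballI) (simp add: sum.neutral)

lemma ip_zero: "ip n x x = 0 \<Longrightarrow> i < n \<Longrightarrow> x i = 0"
proof -
  assume z: "ip n x x = 0" and i: "i < n"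
  have "x i * x i \<le> ip n x x" unfolding ip_def by (rule member_le_sum) (use i in auto)
  then have "x i * x i = 0" using z zero_le_square[of "x i"] by linarith
  then show "x i = 0" by simp
qed

lemma ricQ_curv4: "ricQ n Rm v = (\<Sum>i<n. curv4 n Rm (evec i) v (evec i) v)"
proof -
  have "(\<Sum>i<n. curv4 n Rm (evec i) v (evec i) v) = (\<Sum>i<n. ip n v (\<lambda>b. ip n v (\<lambda>d. Rm i b i d)))"
    by (intro sum.cong refl) (simp add: curv4_alt ip_evec1)
  also have "\<dots> = (\<Sum>i<n. \<Sum>j<n. \<Sum>k<n. Rm i j i k * v j * v k)"
    unfolding ip_def by (simp add: sum_distrib_left mult_ac)
  also have "\<dots> = (\<Sum>j<n. \<Sum>i<n. \<Sum>k<n. Rm i j i k * v j * v k)" by (rule sum.swap)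
  also have "\<dots> = (\<Sum>j<n. \<Sum>k<n. \<Sum>i<n. Rm i j i k * v j * v k)"
    by (rule sum.cong[OF refl], rule sum.swap)
  also have "\<dots> = ricQ n Rm v"
    unfolding ricQ_def ricci_def by (simp add: sum_distrib_right)
  finally show ?thesis by simp
qed

context
  fixes n :: nat and Rm :: "nat \<Rightarrow> nat \<Rightarrow> nat \<Rightarrow> nat \<Rightarrow> real"
  assumes ac: "alg_curv_tensor n Rm"
begin

lemma sec_all:
  assumes sec: "nonneg_sectional n Rm"
  shows "curv4 n Rm x y x y \<ge> 0"
proof (cases "ip n x x = 0")
  case True
  then show ?thesis using curv4_zero1[where x=x] ip_zero by simp
next
  case False
  define c where "c = ip n x y / ip n x x"
  define w where "w = (\<lambda>i. y i - c * x i)"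
  have wx: "wedge x w = wedge x y" unfolding wedge_def w_def by (intro ext) (simp add: algebra_simps)
  have e: "curv4 n Rm x y x y = curv4 n Rm x w x w"
    using ba_wedge[OF alg_sym[OF ac], of x y x y] ba_wedge[OF alg_sym[OF ac], of x w x w] wx by simp
  show ?thesis
  proof (cases "ip n w w = 0")
    case True
    then show ?thesis using e curv4_zero2[where y=w] ip_zero by simp
  next
    case False
    define sx where "sx = sqrt (ip n x x)"
    define sw where "sw = sqrt (ip n w w)"
    have nx: "ip n x x > 0" using \<open>ip n x x \<noteq> 0\<close> ip_nonneg[of n x] by linarith
    have nw: "ip n w w > 0" using False ip_nonneg[of n w] by linarith
    have sx: "sx > 0" "sx^2 = ip n x x" using nx by (simp_all add: sx_def)
    have sw: "sw > 0" "sw^2 = ip n w w" using nw by (simp_all add: sw_def)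
    define u where "u = (\<lambda>i. (1/sx) * x i)"
    define v where "v = (\<lambda>i. (1/sw) * w i)"
    have uu: "ip n u u = 1" unfolding u_def ip_scale1 ip_scale2 using sx nx by (simp add: power2_eq_square)
    have vv: "ip n v v = 1" unfolding v_def ip_scale1 ip_scale2 using sw nw by (simp add: power2_eq_square)
    have xw: "ip n x w = 0"
    proof -
      have "ip n x w = ip n x y - c * ip n x x"
        unfolding w_def using ip_diff2[of n x y "\<lambda>i. c * x i"] ip_scale2 by simp
      then show ?thesis unfolding c_def using \<open>ip n x x \<noteq> 0\<close> by simp
    qed
    have uv: "ip n u v = 0" unfolding u_def v_def ip_scale1 ip_scale2 xw by simp
    have "curv4 n Rm u v u v \<ge> 0" using sec uu vv uv unfolding nonneg_sectional_def by blast
    moreover have "curv4 n Rm u v u v = (1/sx * (1/sw))^2 * curv4 n Rm x w x w"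
      unfolding u_def v_def by (rule curv4_scale)
    ultimately have "(1/sx * (1/sw))^2 * curv4 n Rm x w x w \<ge> 0" by simp
    moreover have "(1/sx * (1/sw))^2 > 0" using sx sw by simp
    ultimately have "curv4 n Rm x w x w \<ge> 0" by (simp add: zero_le_mult_iff)
    then show ?thesis using e by simp
  qed
qed

lemma ricci_symm: "symm n (ricci n Rm)"
  unfolding symm_def ricci_def using acS[OF alg_sym[OF ac]] by (auto intro!: sum.cong)

lemma main_from_bounds:
  assumes psd: "\<And>v. ricQ n Rm v \<ge> 0" and up: "\<And>v. ricQ n Rm v \<le> (scal n Rm / 2) * ip n v v"
  shows "(scal n Rm)\<^sup>2 - 2 * ricci_norm_sq n Rm \<ge> 0"
proof -
  have q: "qf n (ricci n Rm) v = ricQ n Rm v" for v by (simp add: qf_def ricQ_def)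
  show ?thesis unfolding ricci_norm_sq_def
    by (rule final_ineq[OF ricci_symm]) (use psd up q in \<open>auto simp: scal_def\<close>)
qed

theorem case_sec:
  assumes sec: "nonneg_sectional n Rm"
  shows "(scal n Rm)\<^sup>2 - 2 * ricci_norm_sq n Rm \<ge> 0"
proof (rule main_from_bounds)
  fix v
  show "ricQ n Rm v \<ge> 0" unfolding ricQ_curv4 by (intro sum_nonneg sec_all[OF sec])
  have "(\<Sum>i<n. \<Sum>j<n. \<Sum>k<n. ba n Rm (Hv v i j k) (Hv v i j k)) \<ge> 0"
  proof (intro sum_nonneg)
    fix i j k
    obtain A B where "Hv v i j k = wedge A B" using Hv_wedge by blast
    then show "ba n Rm (Hv v i j k) (Hv v i j k) \<ge> 0" using ba_wedge[OF alg_sym[OF ac]] sec_all[OF sec] by simp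
  qed
  then show "ricQ n Rm v \<le> (scal n Rm / 2) * ip n v v" unfolding I2[OF alg_sym[OF ac]] by simp
qed

end

lemma set_wp: "set (wedge_pairs n) = {(i,j). i < j \<and> j < n}"
proof (intro Set.set_eqI iffI)
  fix x assume "x \<in> set (wedge_pairs n)" then show "x \<in> {(i,j). i < j \<and> j < n}"
    unfolding wedge_pairs_def by auto
next
  fix x assume "x \<in> {(i,j). i < j \<and> j < n}"
  then obtain a b where "x = (a,b)" "a < b" "b < n" by auto
  then show "x \<in> set (wedge_pairs n)" unfolding wedge_pairs_def by (auto intro!: bexI[of _ a])
qed

lemma map_pair_inj: assumes "x < n" "y < n" "map (Pair x) [Suc x..<n] = map (Pair y) [Suc y..<(n::nat)]"
  shows "x = y"
proof (cases "Suc x < n")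
  case True
  then have "(x, Suc x) \<in> set (map (Pair x) [Suc x..<n])" by simp
  then have "(x, Suc x) \<in> set (map (Pair y) [Suc y..<n])" using assms(3) by simp
  then show ?thesis by auto
next
  case False
  then have "map (Pair y) [Suc y..<n] = []" using assms(3) by simp
  then have "\<not> Suc y < n" using assms(2) by auto
  then show ?thesis using False assms(1,2) by linarith
qed

lemma distinct_wp: "distinct (wedge_pairs n)"
  unfolding wedge_pairs_def
proof (rule distinct_concat)
  show "distinct (map (\<lambda>i. map (Pair i) [Suc i..<n]) [0..<n])"
    by (auto simp: distinct_map inj_on_def intro: map_pair_inj)
qed (auto simp: distinct_map inj_on_def)

lemma length_wp: "length (wedge_pairs n) = (\<Sum>i<n. n - Suc i)"
  unfolding wedge_pairs_def by (simp add: length_concat comp_def interv_sum_list_conv_sum_set_nat lessThan_atLeast0)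

lemma sum_n_minus: "2 * (\<Sum>i<n. n - Suc i) = n * (n - 1)"
proof (induction n)
  case (Suc n)
  have "(\<Sum>i<Suc n. Suc n - Suc i) = (\<Sum>i<n. n - Suc i) + n"
  proof -
    have "(\<Sum>i<Suc n. Suc n - Suc i) = (\<Sum>i<n. Suc n - Suc i)" by simp
    also have "\<dots> = (\<Sum>i<n. n - Suc i) + (\<Sum>i<n. 1)"
      by (subst sum.distrib[symmetric]) (intro sum.cong, auto)
    also have "\<dots> = (\<Sum>i<n. n - Suc i) + n" by simp
    finally show ?thesis .
  qed
  then show ?case using Suc by (cases n) (auto simp: algebra_simps)
qed simp

lemma length_wp_ge: "n \<ge> 4 \<Longrightarrow> length (wedge_pairs n) \<ge> n + 1"
proof -
  assume n: "n \<ge> 4"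
  have "2 * length (wedge_pairs n) = n * (n - 1)" using length_wp sum_n_minus by simp
  moreover have "n * (n - 1) \<ge> 2 * (n + 1)"
  proof -
    have "n * (n - 1) \<ge> n * 3" using n by (intro mult_le_mono2) auto
    moreover have "n * 3 \<ge> 2 * (n + 1)" using n by simp
    ultimately show ?thesis by (rule le_trans[rotated])
  qed
  ultimately show ?thesis by simp
qed

lemma sum_wp: "(\<Sum>a<length (wedge_pairs n). g (wedge_pairs n ! a)) = (\<Sum>p<n. \<Sum>q<n. if p < q then g (p,q) else (0::real))"
proof -
  let ?ps = "wedge_pairs n"
  have "(\<Sum>a<length ?ps. g (?ps ! a)) = sum_list (map g ?ps)"
    by (simp add: sum_list_sum_nth atLeast0LessThan)
  also have "\<dots> = sum g (set ?ps)" by (rule sum_list_distinct_conv_sum_set[OF distinct_wp])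
  also have "set ?ps = {x \<in> {..<n} \<times> {..<n}. fst x < snd x}" unfolding set_wp by auto
  also have "sum g \<dots> = (\<Sum>x\<in>{..<n} \<times> {..<n}. if fst x < snd x then g x else 0)"
    by (rule sum.inter_filter) auto
  also have "\<dots> = (\<Sum>p<n. \<Sum>q<n. if p < q then g (p,q) else 0)"
    by (subst sum.cartesian_product) (rule sum.cong, auto)
  finally show ?thesis .
qed

lemma sum_wp2: "(\<Sum>a<length (wedge_pairs n). g (fst (wedge_pairs n ! a)) (snd (wedge_pairs n ! a))) = (\<Sum>p<n. \<Sum>q<n. if p < q then g p q else (0::real))"
proof -
  let ?ps = "wedge_pairs n"
  let ?g = "\<lambda>x. g (fst x) (snd x)"
  have "(\<Sum>a<length ?ps. ?g (?ps ! a)) = sum_list (map ?g ?ps)"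
    by (simp add: sum_list_sum_nth atLeast0LessThan)
  also have "\<dots> = sum ?g (set ?ps)" by (rule sum_list_distinct_conv_sum_set[OF distinct_wp])
  also have "set ?ps = {x \<in> {..<n} \<times> {..<n}. fst x < snd x}" unfolding set_wp by auto
  also have "sum ?g \<dots> = (\<Sum>x\<in>{..<n} \<times> {..<n}. if fst x < snd x then ?g x else 0)"
    by (rule sum.inter_filter) auto
  also have "\<dots> = (\<Sum>p<n. \<Sum>q<n. if p < q then g p q else 0)"
    by (subst sum.cartesian_product) (rule sum.cong, auto)
  finally show ?thesis .
qed

lemma half_sum:
  fixes g :: "nat \<Rightarrow> nat \<Rightarrow> real"
  assumes sym: "\<And>p q. p < n \<Longrightarrow> q < n \<Longrightarrow> g p q = g q p" and dg: "\<And>p. p < n \<Longrightarrow> g p p = 0"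
  shows "(\<Sum>p<n. \<Sum>q<n. if p < q then g p q else 0) = (\<Sum>p<n. \<Sum>q<n. g p q) / 2"
proof -
  have "(\<Sum>p<n. \<Sum>q<n. g p q) = (\<Sum>p<n. \<Sum>q<n. (if p < q then g p q else 0) + (if q < p then g p q else 0))"
    by (intro sum.cong refl) (auto simp: dg)
  also have "\<dots> = (\<Sum>p<n. \<Sum>q<n. if p < q then g p q else 0) + (\<Sum>p<n. \<Sum>q<n. if q < p then g p q else 0)"
    by (simp add: sum.distrib)
  also have "(\<Sum>p<n. \<Sum>q<n. if q < p then g p q else 0) = (\<Sum>q<n. \<Sum>p<n. if q < p then g p q else 0)"
    by (rule sum.swap)
  also have "\<dots> = (\<Sum>p<n. \<Sum>q<n. if p < q then g p q else 0)"
    by (intro sum.cong refl) (auto simp: sym)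
  finally show ?thesis by simp
qed

definition pf :: "nat \<Rightarrow> (nat \<Rightarrow> nat \<Rightarrow> real) \<Rightarrow> nat \<Rightarrow> real" where
  "pf n X = (\<lambda>a. X (fst (wedge_pairs n ! a)) (snd (wedge_pairs n ! a)))"

definition asym :: "nat \<Rightarrow> (nat \<Rightarrow> nat \<Rightarrow> real) \<Rightarrow> bool" where
  "asym n X \<longleftrightarrow> (\<forall>p<n. \<forall>q<n. X p q = - X q p)"

lemma asymD: "asym n X \<Longrightarrow> p < n \<Longrightarrow> q < n \<Longrightarrow> X p q = - X q p"
  unfolding asym_def by blast

lemma asym_diag: "asym n X \<Longrightarrow> p < n \<Longrightarrow> X p p = 0"
  using asymD[of n X p p] by linarith

lemma ip_pf:
  assumes "asym n X" "asym n Y"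
  shows "ip (length (wedge_pairs n)) (pf n Y) (pf n X) = (\<Sum>p<n. \<Sum>q<n. Y p q * X p q) / 2"
proof -
  have "ip (length (wedge_pairs n)) (pf n Y) (pf n X) = (\<Sum>p<n. \<Sum>q<n. if p < q then Y p q * X p q else 0)"
    unfolding ip_def pf_def using sum_wp2[where n=n and g="\<lambda>p q. Y p q * X p q"] by simp
  also have "\<dots> = (\<Sum>p<n. \<Sum>q<n. Y p q * X p q) / 2"
  proof (rule half_sum)
    fix p q assume "p < n" "q < n"
    then show "Y p q * X p q = Y q p * X q p" using asymD[OF assms(1), of p q] asymD[OF assms(2), of p q] by simp
  next
    fix p assume "p < n" then show "Y p p * X p p = 0" using asym_diag[OF assms(1)] by simp
  qed
  finally show ?thesis .
qed

definition Amat :: "nat \<Rightarrow> (nat \<Rightarrow> nat \<Rightarrow> nat \<Rightarrow> nat \<Rightarrow> real) \<Rightarrow> nat \<Rightarrow> nat \<Rightarrow> real" where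
  "Amat n Rm = (\<lambda>a b. Rm (fst (wedge_pairs n ! a)) (snd (wedge_pairs n ! a)) (fst (wedge_pairs n ! b)) (snd (wedge_pairs n ! b)))"

lemma qf_pf:
  assumes st: "sym_tensor n Rm" and X: "asym n X"
  shows "qf (length (wedge_pairs n)) (Amat n Rm) (pf n X) = ba n Rm X X"
proof -
  let ?N = "length (wedge_pairs n)"
  define G where "G = (\<lambda>p q. (\<Sum>r<n. \<Sum>s<n. Rm p q r s * X p q * X r s) / 2)"
  have inner: "(\<Sum>b<?N. Amat n Rm a b * pf n X a * pf n X b) = G (fst (wedge_pairs n ! a)) (snd (wedge_pairs n ! a))"
    if "a < ?N" for a
  proof -
    define p where "p = fst (wedge_pairs n ! a)"
    define q where "q = snd (wedge_pairs n ! a)"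
    have pq: "p < n" "q < n" using that nth_mem[OF that] unfolding set_wp p_def q_def by auto
    have "(\<Sum>b<?N. Amat n Rm a b * pf n X a * pf n X b) = (\<Sum>r<n. \<Sum>s<n. if r < s then Rm p q r s * X p q * X r s else 0)"
      unfolding Amat_def pf_def p_def[symmetric] q_def[symmetric]
      using sum_wp2[where n=n and g="\<lambda>r s. Rm p q r s * X p q * X r s"] by simp
    also have "\<dots> = G p q" unfolding G_def
    proof (rule half_sum)
      fix r s assume "r < n" "s < n"
      then show "Rm p q r s * X p q * X r s = Rm p q s r * X p q * X s r"
        using acB[OF st, of p q r s] asymD[OF X, of r s] pq by simp
    next
      fix r assume "r < n" then show "Rm p q r r * X p q * X r r = 0" using asym_diag[OF X] by simp
    qed
    finally show ?thesis unfolding p_def q_def .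
  qed
  have "qf ?N (Amat n Rm) (pf n X) = (\<Sum>a<?N. G (fst (wedge_pairs n ! a)) (snd (wedge_pairs n ! a)))"
    unfolding qf_def using inner by (intro sum.cong) auto
  also have "\<dots> = (\<Sum>p<n. \<Sum>q<n. if p < q then G p q else 0)"
    using sum_wp2[where n=n and g="G"] by simp
  also have "\<dots> = (\<Sum>p<n. \<Sum>q<n. G p q) / 2"
  proof (rule half_sum)
    fix p q assume pq: "p < n" "q < n"
    have "(\<Sum>r<n. \<Sum>s<n. Rm p q r s * X p q * X r s) = (\<Sum>r<n. \<Sum>s<n. Rm q p r s * X q p * X r s)"
      by (intro sum.cong refl) (use acA[OF st, of p q] asymD[OF X, of p q] pq in simp)
    then show "G p q = G q p" unfolding G_def by simp
  next
    fix p assume "p < n" then show "G p p = 0" unfolding G_def using asym_diag[OF X] by simp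
  qed
  also have "\<dots> = ba n Rm X X" unfolding G_def ba_def by (simp add: sum_divide_distrib)
  finally show ?thesis .
qed

definition idx :: "nat \<Rightarrow> nat \<times> nat \<Rightarrow> nat" where
  "idx n = the_inv_into {..<length (wedge_pairs n)} (\<lambda>a. wedge_pairs n ! a)"
definition lift :: "nat \<Rightarrow> (nat \<Rightarrow> real) \<Rightarrow> nat \<Rightarrow> nat \<Rightarrow> real" where
  "lift n y = (\<lambda>p q. if p < q then y (idx n (p,q)) else if q < p then - y (idx n (q,p)) else 0)"

lemma lift_asym: "asym n (lift n y)"
  unfolding asym_def lift_def by auto

lemma pf_lift: assumes "a < length (wedge_pairs n)" shows "pf n (lift n y) a = y a"
proof -
  let ?ps = "wedge_pairs n"
  have inj: "inj_on (\<lambda>a. ?ps ! a) {..<length ?ps}"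
    using distinct_wp[of n] by (simp add: inj_on_def nth_eq_iff_index_eq)
  have mem: "?ps ! a \<in> set ?ps" using assms by simp
  then have lt: "fst (?ps ! a) < snd (?ps ! a)" unfolding set_wp by auto
  have "idx n (?ps ! a) = a" unfolding idx_def using the_inv_into_f_f[OF inj] assms by simp
  then have "idx n (fst (?ps ! a), snd (?ps ! a)) = a" by simp
  then show ?thesis unfolding pf_def lift_def using lt by simp
qed

lemma ip_lift: assumes X: "asym n X"
  shows "ip (length (wedge_pairs n)) y (pf n X) = (\<Sum>p<n. \<Sum>q<n. lift n y p q * X p q) / 2"
proof -
  have "ip (length (wedge_pairs n)) y (pf n X) = ip (length (wedge_pairs n)) (pf n (lift n y)) (pf n X)"
    by (rule ip_cong1) (simp add: pf_lift)
  also have "\<dots> = (\<Sum>p<n. \<Sum>q<n. lift n y p q * X p q) / 2" by (rule ip_pf[OF X lift_asym])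
  finally show ?thesis .
qed

definition TT :: "(nat \<Rightarrow> nat \<Rightarrow> real) \<Rightarrow> nat \<Rightarrow> nat \<Rightarrow> nat \<Rightarrow> nat \<Rightarrow> real" where
  "TT Y = (\<lambda>p q r s. Y p q * Y r s)"

lemma TT_sym: assumes "asym n Y" shows "sym_tensor n (TT Y)"
  unfolding sym_tensor_def TT_def
proof (intro allI impI conjI)
  fix i j k l assume "i < n" "j < n" "k < n" "l < n"
  then show "Y i j * Y k l = - (Y j i * Y k l)" using asymD[OF assms, of i j] by simp
qed (simp add: mult.commute)

lemma ba_TT: "ba n (TT Y) X X = ((\<Sum>p<n. \<Sum>q<n. Y p q * X p q) / 2)^2"
proof -
  have "(\<Sum>p<n. \<Sum>q<n. Y p q * X p q)^2 = (\<Sum>p<n. \<Sum>q<n. \<Sum>r<n. \<Sum>s<n. (Y p q * X p q) * (Y r s * X r s))"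
    by (simp only: power2_eq_square sum_distrib_right) (simp only: sum_distrib_left)
  then show ?thesis unfolding ba_def TT_def by (simp add: power_divide mult_ac)
qed

lemma scal_TT: "scal n (TT Y) = (\<Sum>p<n. \<Sum>q<n. Y p q * Y p q)"
  unfolding scal_def ricci_def TT_def by (rule sum.swap)

lemma wedge_asym: "asym n (wedge x y)" unfolding asym_def wedge_def by auto
lemma Hv_asym: "asym n (Hv v i j k)" unfolding asym_def Hv_def Ev_def wedge_def by (auto simp: algebra_simps)

lemma sum3: "(\<Sum>t\<in>{..<n} \<times> {..<n} \<times> {..<n}. f t) = (\<Sum>i<n. \<Sum>j<(n::nat). \<Sum>k<n. (f (i,j,k)::real))"
  by (simp add: sum.cartesian_product)

lemma scalar_key:
  fixes \<mu> C :: "nat \<Rightarrow> real"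
  assumes N: "N \<ge> 2" and srt: "\<forall>j l. j \<le> l \<longrightarrow> l < N \<longrightarrow> \<mu> j \<le> \<mu> l" and m01: "\<mu> 0 + \<mu> 1 \<ge> 0"
    and C: "\<And>k. k < N \<Longrightarrow> 0 \<le> C k \<and> C k \<le> s" and S: "(\<Sum>k<N. C k) \<ge> 2 * s"
  shows "(\<Sum>k<N. \<mu> k * C k) \<ge> 0"
proof -
  obtain N' where N': "N = Suc N'" using N by (cases N) auto
  have s0: "s \<ge> 0" using C[of 0] N by auto
  have "\<mu> 0 \<le> \<mu> 1" using srt N by auto
  then have m1: "\<mu> 1 \<ge> 0" using m01 by linarith
  have "(\<Sum>k<N'. \<mu> 1 * C (Suc k)) \<le> (\<Sum>k<N'. \<mu> (Suc k) * C (Suc k))"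
  proof (intro sum_mono mult_right_mono)
    fix k assume "k \<in> {..<N'}"
    then show "\<mu> 1 \<le> \<mu> (Suc k)" using srt N' by auto
    show "0 \<le> C (Suc k)" using C \<open>k \<in> {..<N'}\<close> N' by auto
  qed
  moreover have "(\<Sum>k<N. \<mu> k * C k) = \<mu> 0 * C 0 + (\<Sum>k<N'. \<mu> (Suc k) * C (Suc k))"
    unfolding N' by (rule sum.lessThan_Suc_shift)
  moreover have "(\<Sum>k<N. C k) = C 0 + (\<Sum>k<N'. C (Suc k))"
    unfolding N' by (rule sum.lessThan_Suc_shift)
  ultimately have "(\<Sum>k<N. \<mu> k * C k) \<ge> \<mu> 0 * C 0 + \<mu> 1 * ((\<Sum>k<N. C k) - C 0)"
    by (simp add: sum_distrib_left)
  moreover have "\<mu> 1 * ((\<Sum>k<N. C k) - C 0) \<ge> \<mu> 1 * (2 * s - C 0)"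
    using m1 S by (intro mult_left_mono) auto
  moreover have "(\<mu> 0 - \<mu> 1) * C 0 \<ge> (\<mu> 0 - \<mu> 1) * s"
    using C[of 0] N srt by (intro mult_left_mono_neg) auto
  ultimately have "(\<Sum>k<N. \<mu> k * C k) \<ge> s * (\<mu> 0 + \<mu> 1)" by (simp add: algebra_simps)
  moreover have "s * (\<mu> 0 + \<mu> 1) \<ge> 0" using s0 m01 by simp
  ultimately show ?thesis by linarith
qed

context eigsys begin

lemma key:
  assumes N: "N \<ge> 2" and srt: "\<forall>j l. j \<le> l \<longrightarrow> l < N \<longrightarrow> \<mu> j \<le> \<mu> l" and m01: "\<mu> 0 + \<mu> 1 \<ge> 0"
    and T: "finite T" and c: "\<And>t. t \<in> T \<Longrightarrow> c t \<ge> 0"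
    and up: "\<And>k. k < N \<Longrightarrow> (\<Sum>t\<in>T. c t * (ip N (u k) (w t))^2) \<le> s"
    and tr: "(\<Sum>t\<in>T. c t * ip N (w t) (w t)) \<ge> 2 * s"
  shows "(\<Sum>t\<in>T. c t * qf N M (w t)) \<ge> 0"
proof -
  define C where "C = (\<lambda>k. \<Sum>t\<in>T. c t * (ip N (u k) (w t))^2)"
  have "(\<Sum>t\<in>T. c t * qf N M (w t)) = (\<Sum>t\<in>T. \<Sum>k<N. \<mu> k * (c t * (ip N (u k) (w t))^2))"
    unfolding qf_expand by (simp add: sum_distrib_left mult_ac)
  also have "\<dots> = (\<Sum>k<N. \<mu> k * C k)" unfolding C_def by (subst sum.swap) (simp add: sum_distrib_left)
  finally have e: "(\<Sum>t\<in>T. c t * qf N M (w t)) = (\<Sum>k<N. \<mu> k * C k)" .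
  have "(\<Sum>k<N. C k) = (\<Sum>t\<in>T. c t * (\<Sum>k<N. (ip N (u k) (w t))^2))"
    unfolding C_def by (subst sum.swap) (simp add: sum_distrib_left)
  also have "\<dots> = (\<Sum>t\<in>T. c t * ip N (w t) (w t))" by (simp add: parseval)
  finally have S: "(\<Sum>k<N. C k) \<ge> 2 * s" using tr by simp
  have Ck: "0 \<le> C k \<and> C k \<le> s" if "k < N" for k
    using up[OF that] c unfolding C_def by (auto intro!: sum_nonneg)
  show ?thesis unfolding e by (rule scalar_key[OF N srt m01 Ck S])
qed

end

lemma ip_w1: assumes i: "i < n"
  shows "ip (length (wedge_pairs n)) (pf n (wedge (evec i) v)) (pf n (wedge (evec i) v)) = ip n v v - (v i)^2"
proof -
  let ?e = "evec i"
  have se: "\<And>f. (\<Sum>p<n. f p * ?e p) = f i" using i by (rule sum_evec_r)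
  have ee: "(\<Sum>p<n. ?e p * ?e p) = 1" using se[of ?e] by (simp add: evec_def)
  have "(\<Sum>p<n. \<Sum>q<n. wedge ?e v p q * wedge ?e v p q)
      = (\<Sum>p<n. \<Sum>q<n. (?e p * ?e p) * (v q * v q) + (v p * v p) * (?e q * ?e q) - 2 * ((v p * ?e p) * (v q * ?e q)))"
    unfolding wedge_def by (intro sum.cong refl) (simp add: algebra_simps)
  also have "\<dots> = (\<Sum>p<n. \<Sum>q<n. (?e p * ?e p) * (v q * v q)) + (\<Sum>p<n. \<Sum>q<n. (v p * v p) * (?e q * ?e q))
       - 2 * (\<Sum>p<n. \<Sum>q<n. (v p * ?e p) * (v q * ?e q))"
    by (simp add: sum.distrib sum_subtractf sum_distrib_left)
  also have "\<dots> = (\<Sum>p<n. ?e p * ?e p) * (\<Sum>q<n. v q * v q) + (\<Sum>p<n. v p * v p) * (\<Sum>q<n. ?e q * ?e q)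
        - 2 * (\<Sum>p<n. v p * ?e p) * (\<Sum>q<n. v q * ?e q)"
    by (simp only: sum_product mult.assoc)
  also have "\<dots> = 2 * ip n v v - 2 * (v i)^2" unfolding ee se by (simp add: ip_def power2_eq_square)
  finally show ?thesis using ip_pf[OF wedge_asym wedge_asym, of n "evec i" v "evec i" v] by simp
qed

theorem case_2nonneg:
  assumes ac: "alg_curv_tensor n Rm" and n4: "n \<ge> 4" and tn: "two_nonneg_curv_op n Rm"
  shows "(scal n Rm)\<^sup>2 - 2 * ricci_norm_sq n Rm \<ge> 0"
proof -
  define N where "N = length (wedge_pairs n)"
  define A where "A = Amat n Rm"
  have st: "sym_tensor n Rm" using alg_sym[OF ac] .
  have Nn: "N \<ge> n + 1" using length_wp_ge n4 unfolding N_def by blast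
  have N2: "N \<ge> 2" using Nn n4 by simp
  have comp: "fst (wedge_pairs n ! a) < n \<and> snd (wedge_pairs n ! a) < n" if "a < N" for a
    using nth_mem[of a "wedge_pairs n"] that unfolding N_def set_wp by auto
  have symA: "symm N A" unfolding symm_def A_def Amat_def
  proof (intro allI impI)
    fix i j assume "i < N" "j < N"
    then show "Rm (fst (wedge_pairs n ! i)) (snd (wedge_pairs n ! i)) (fst (wedge_pairs n ! j)) (snd (wedge_pairs n ! j)) =
          Rm (fst (wedge_pairs n ! j)) (snd (wedge_pairs n ! j)) (fst (wedge_pairs n ! i)) (snd (wedge_pairs n ! i))"
      using acS[OF st, of "fst (wedge_pairs n ! i)" "snd (wedge_pairs n ! i)" "fst (wedge_pairs n ! j)" "snd (wedge_pairs n ! j)"]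
        comp[of i] comp[of j] by simp
  qed
  obtain u \<mu> where orth: "\<forall>j<N. \<forall>l<N. ip N (u j) (u l) = (if j = l then 1 else 0)"
     and eig: "\<forall>j<N. \<forall>i<N. mv N A (u j) i = \<mu> j * u j i"
     and srt: "\<forall>j l. j \<le> l \<longrightarrow> l < N \<longrightarrow> \<mu> j \<le> \<mu> l"
    using spectral[OF symA] by (elim exE conjE) (rule that, assumption+)
  interpret E: eigsys N A u \<mu> using symA orth eig by unfold_locales auto
  have cm: "curv_op_mat n Rm = E.Am"
  proof -
    have "E.Am = Matrix.mat N N (\<lambda>(i,j). A i j)" by (rule E.Am_def)
    then show ?thesis unfolding curv_op_mat_def Let_def A_def Amat_def N_def by (simp add: case_prod_beta)
  qed
  have sorted: "sorted (map \<mu> [0..<N])" unfolding sorted_iff_nth_mono using srt by auto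
  have ev: "curv_op_eigenvalues n Rm = map \<mu> [0..<N]"
    unfolding curv_op_eigenvalues_def cm E.proots_Am sorted_list_of_multiset_mset sorted_sort_id[OF sorted] ..
  have m01: "\<mu> 0 + \<mu> 1 \<ge> 0" using tn N2 unfolding two_nonneg_curv_op_def ev Let_def by simp
  show ?thesis
  proof (rule main_from_bounds[OF ac])
    fix v
    define s where "s = ip n v v"
    have s0: "s \<ge> 0" unfolding s_def by (rule ip_nonneg)
    define w1 where "w1 = (\<lambda>i. pf n (wedge (evec i) v))"
    define T2 where "T2 = {..<n} \<times> {..<n} \<times> {..<n}"
    define w2 where "w2 = (\<lambda>t. pf n (case t of (i,j,k) \<Rightarrow> Hv v i j k))"
    have F1: "(\<Sum>i<n. 1 * qf N A (w1 i)) = ricQ n Rm v"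
    proof -
      have "(\<Sum>i<n. 1 * qf N A (w1 i)) = (\<Sum>i<n. curv4 n Rm (evec i) v (evec i) v)"
        unfolding w1_def A_def N_def by (simp add: qf_pf[OF st wedge_asym] ba_wedge[OF st])
      then show ?thesis by (simp add: ricQ_curv4)
    qed
    have F2: "(\<Sum>t\<in>T2. (1/6) * qf N A (w2 t)) = (3 * s * scal n Rm - 6 * ricQ n Rm v) / 6"
    proof -
      have "(\<Sum>t\<in>T2. (1/6) * qf N A (w2 t)) = (\<Sum>i<n. \<Sum>j<n. \<Sum>k<n. (1/6) * ba n Rm (Hv v i j k) (Hv v i j k))"
        unfolding T2_def sum3 w2_def A_def N_def by (simp add: qf_pf[OF st Hv_asym])
      also have "\<dots> = (1/6) * (\<Sum>i<n. \<Sum>j<n. \<Sum>k<n. ba n Rm (Hv v i j k) (Hv v i j k))"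
        by (simp add: sum_distrib_left)
      finally show ?thesis unfolding I2[OF st] s_def by simp
    qed
    have perk: "(\<Sum>i<n. (ip N (u k) (w1 i))^2) \<ge> 0 \<and>
                (\<Sum>i<n. (ip N (u k) (w1 i))^2) \<le> s \<and>
                (\<Sum>t\<in>T2. (1/6) * (ip N (u k) (w2 t))^2) = s - (\<Sum>i<n. (ip N (u k) (w1 i))^2)" if k: "k < N" for k
    proof -
      define Y where "Y = lift n (u k)"
      have Ya: "asym n Y" unfolding Y_def by (rule lift_asym)
      have st': "sym_tensor n (TT Y)" by (rule TT_sym[OF Ya])
      have sq: "(ip N (u k) (pf n X))^2 = ba n (TT Y) X X" if "asym n X" for X
        unfolding ba_TT Y_def N_def ip_lift[OF that] ..
      have one: "ip N (u k) (u k) = 1" using orth k by simp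
      have "ip N (pf n Y) (pf n Y) = ip N (u k) (pf n Y)"
        by (rule ip_cong1) (simp add: Y_def N_def pf_lift)
      also have "\<dots> = ip N (u k) (u k)"
        by (rule ip_cong2) (simp add: Y_def N_def pf_lift)
      finally have "ip N (pf n Y) (pf n Y) = ip N (u k) (u k)" .
      then have sc: "scal n (TT Y) = 2" unfolding scal_TT using ip_pf[OF Ya Ya] one N_def by simp
      have A1: "(\<Sum>i<n. (ip N (u k) (w1 i))^2) = ricQ n (TT Y) v"
      proof -
        have "(\<Sum>i<n. (ip N (u k) (w1 i))^2) = (\<Sum>i<n. curv4 n (TT Y) (evec i) v (evec i) v)"
          unfolding w1_def by (simp add: sq[OF wedge_asym] ba_wedge[OF st'])
        then show ?thesis by (simp add: ricQ_curv4)
      qed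
      have A2: "(\<Sum>t\<in>T2. (1/6) * (ip N (u k) (w2 t))^2) = s - ricQ n (TT Y) v"
      proof -
        have "(\<Sum>t\<in>T2. (1/6) * (ip N (u k) (w2 t))^2) = (1/6) * (\<Sum>i<n. \<Sum>j<n. \<Sum>k<n. ba n (TT Y) (Hv v i j k) (Hv v i j k))"
          unfolding T2_def sum3 w2_def by (simp add: sq[OF Hv_asym] sum_distrib_left)
        then show ?thesis unfolding I2[OF st'] sc s_def by simp
      qed
      have "(\<Sum>i<n. (ip N (u k) (w1 i))^2) \<ge> 0" by (intro sum_nonneg) simp
      moreover have "(\<Sum>t\<in>T2. (1/6) * (ip N (u k) (w2 t))^2) \<ge> 0" by (intro sum_nonneg) simp
      ultimately show ?thesis using A1 A2 by simp
    qed
    have tr1: "(\<Sum>i<n. 1 * ip N (w1 i) (w1 i)) = (real n - 1) * s"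
    proof -
      have "(\<Sum>i<n. 1 * ip N (w1 i) (w1 i)) = (\<Sum>i<n. s - (v i)^2)"
        unfolding w1_def N_def s_def by (intro sum.cong refl) (simp add: ip_w1)
      also have "\<dots> = real n * s - s" by (simp add: sum_subtractf s_def ip_def power2_eq_square)
      finally show ?thesis by (simp add: algebra_simps)
    qed
    have "(\<Sum>i<n. 1 * qf N A (w1 i)) \<ge> 0"
    proof (rule E.key[OF N2 srt m01])
      show "(\<Sum>i<n. 1 * (ip N (u k) (w1 i))^2) \<le> s" if "k < N" for k using perk[OF that] by simp
      show "(\<Sum>i<n. 1 * ip N (w1 i) (w1 i)) \<ge> 2 * s" unfolding tr1 using n4 s0 by (intro mult_right_mono) auto
    qed auto
    then show "ricQ n Rm v \<ge> 0" using F1 by simp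
    have tr2: "(\<Sum>t\<in>T2. (1/6) * ip N (w2 t) (w2 t)) = real N * s - (real n - 1) * s"
    proof -
      have "(\<Sum>t\<in>T2. (1/6) * ip N (w2 t) (w2 t)) = (\<Sum>t\<in>T2. \<Sum>k<N. (1/6) * (ip N (u k) (w2 t))^2)"
        by (simp add: E.parseval[symmetric] sum_distrib_left)
      also have "\<dots> = (\<Sum>k<N. \<Sum>t\<in>T2. (1/6) * (ip N (u k) (w2 t))^2)" by (rule sum.swap)
      also have "\<dots> = (\<Sum>k<N. s - (\<Sum>i<n. (ip N (u k) (w1 i))^2))" using perk by (intro sum.cong) auto
      also have "\<dots> = real N * s - (\<Sum>i<n. \<Sum>k<N. (ip N (u k) (w1 i))^2)" by (simp add: sum_subtractf sum.swap[of _ "{..<N}"])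
      also have "(\<Sum>i<n. \<Sum>k<N. (ip N (u k) (w1 i))^2) = (\<Sum>i<n. 1 * ip N (w1 i) (w1 i))" by (simp add: E.parseval)
      finally show ?thesis unfolding tr1 .
    qed
    have "(\<Sum>t\<in>T2. (1/6) * qf N A (w2 t)) \<ge> 0"
    proof (rule E.key[OF N2 srt m01])
      show "finite T2" unfolding T2_def by simp
      show "(\<Sum>t\<in>T2. (1/6) * (ip N (u k) (w2 t))^2) \<le> s" if "k < N" for k using perk[OF that] by simp
      have "real N \<ge> real n + 1" using Nn by simp
      then have "real N * s \<ge> (real n + 1) * s" using s0 by (intro mult_right_mono) auto
      then show "(\<Sum>t\<in>T2. (1/6) * ip N (w2 t) (w2 t)) \<ge> 2 * s" unfolding tr2 by (simp add: algebra_simps)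
    qed auto
    then show "ricQ n Rm v \<le> (scal n Rm / 2) * ip n v v" using F2 unfolding s_def by (simp add: algebra_simps)
  qed
qed

theorem lemma4p4:
  fixes n :: nat and Rm :: "nat \<Rightarrow> nat \<Rightarrow> nat \<Rightarrow> nat \<Rightarrow> real"
  assumes "alg_curv_tensor n Rm"
    and "(n = 3 \<and> nonneg_sectional n Rm) \<or> (n \<ge> 4 \<and> two_nonneg_curv_op n Rm)"
  shows "(scal n Rm)\<^sup>2 - 2 * ricci_norm_sq n Rm \<ge> 0"
  using assms(2)
proof (elim disjE conjE)
  assume "nonneg_sectional n Rm"
  then show ?thesis by (rule case_sec[OF assms(1)])
next
  assume "n \<ge> 4" "two_nonneg_curv_op n Rm"
  then show ?thesis by (rule case_2nonneg[OF assms(1)])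
qed

end
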